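(* Let $\mathcal{A}$ be a commutative domain of essentially finite type over a field $K$ of arbitrary characteristic, $R$ a subalgebra of $\mathcal{D}(\mathcal{A})$ containing $\mathcal{A}$, and $S$ a multiplicative subset of $\mathcal{A}\setminus\{0\}$. Then $S$ is a (left and right) denominator set of $R$ consisting of regular elements, and $S^{-1}\mathcal{A}\subseteq S^{-1}R\subseteq S^{-1}\mathcal{D}(\mathcal{A})\cong\mathcal{D}(S^{-1}\mathcal{A})$. If, in addition, $S^{-1}R=S^{-1}\mathcal{D}(\mathcal{A})$, then $R$ is an essential left and right $R$-submodule of $\mathcal{D}(\mathcal{A})$.
   Context: Essentially finite type: a localization of a finitely generated commutative $K$-algebra. $\mathcal{D}(\mathcal{A})=\bigcup_{i\ge0}\mathcal{D}(\mathcal{A})_i\subseteq\mathrm{End}_K(\mathcal{A})$ with $\mathcal{D}(\mathcal{A})_{-1}=0$, $\mathcal{D}(\mathcal{A})_i=\{u\mid au-ua\in\mathcal{D}(\mathcal{A})_{i-1}\ \forall a\in\mathcal{A}\}$, $\mathcal{A}=\mathcal{D}(\mathcal{A})_0$. A submodule is essential if it has nonzero intersection with every nonzero submodule. *)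

theory Defs
  imports Main
begin

text \<open>The commutative domain A is represented as a subring of an ambient field 'f
 (e.g. its fraction field); the base field K is a subfield of 'f contained in A.
 Operators on a carrier C are functions 'f => 'f that vanish outside C.\<close>

definition sub_ring :: "'f::field set \<Rightarrow> bool" where
  "sub_ring B \<longleftrightarrow> 0 \<in> B \<and> 1 \<in> B \<and> (\<forall>x\<in>B. \<forall>y\<in>B. x + y \<in> B \<and> x * y \<in> B) \<and> (\<forall>x\<in>B. - x \<in> B)"

definition sub_field :: "'f::field set \<Rightarrow> bool" where
  "sub_field K \<longleftrightarrow> sub_ring K \<and> (\<forall>x\<in>K. x \<noteq> 0 \<longrightarrow> inverse x \<in> K)"

definition alg_gen :: "'f::field set \<Rightarrow> 'f set \<Rightarrow> 'f set" where
  "alg_gen K G = \<Inter>{B. sub_ring B \<and> K \<union> G \<subseteq> B}"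

definition mult_closed :: "'f::field set \<Rightarrow> bool" where
  "mult_closed T \<longleftrightarrow> 1 \<in> T \<and> (\<forall>x\<in>T. \<forall>y\<in>T. x * y \<in> T)"

definition ess_finite_type :: "'f::field set \<Rightarrow> 'f set \<Rightarrow> bool" where
  "ess_finite_type K A \<longleftrightarrow> (\<exists>G T. finite G \<and> G \<subseteq> A \<and> T \<subseteq> alg_gen K G \<and> mult_closed T \<and> 0 \<notin> T
      \<and> A = {b / t | b t. b \<in> alg_gen K G \<and> t \<in> T})"

definition loc :: "'f::field set \<Rightarrow> 'f set \<Rightarrow> 'f set" where
  "loc S A = {a / s | a s. a \<in> A \<and> s \<in> S}"

definition mulop :: "'f::field set \<Rightarrow> 'f \<Rightarrow> ('f \<Rightarrow> 'f)" where
  "mulop C a = (\<lambda>x. if x \<in> C then a * x else 0)"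

definition fzero :: "'f::field \<Rightarrow> 'f" where "fzero = (\<lambda>_. 0)"
definition fadd :: "('f::field \<Rightarrow> 'f) \<Rightarrow> ('f \<Rightarrow> 'f) \<Rightarrow> ('f \<Rightarrow> 'f)" where
  "fadd u v = (\<lambda>x. u x + v x)"
definition fneg :: "('f::field \<Rightarrow> 'f) \<Rightarrow> ('f \<Rightarrow> 'f)" where
  "fneg u = (\<lambda>x. - u x)"

definition endK :: "'f::field set \<Rightarrow> 'f set \<Rightarrow> ('f \<Rightarrow> 'f) set" where
  "endK K C = {u. (\<forall>x. x \<notin> C \<longrightarrow> u x = 0) \<and> (\<forall>x\<in>C. u x \<in> C)
     \<and> (\<forall>x\<in>C. \<forall>y\<in>C. u (x + y) = u x + u y) \<and> (\<forall>k\<in>K. \<forall>x\<in>C. u (k * x) = k * u x)}"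

definition comm :: "'f::field set \<Rightarrow> 'f \<Rightarrow> ('f \<Rightarrow> 'f) \<Rightarrow> ('f \<Rightarrow> 'f)" where
  "comm C a u = (\<lambda>x. mulop C a (u x) - u (mulop C a x))"

text \<open>Dord K C i = D(C)_i (index i of the paper)\<close>
fun Dord :: "'f::field set \<Rightarrow> 'f set \<Rightarrow> nat \<Rightarrow> ('f \<Rightarrow> 'f) set" where
  "Dord K C 0 = {u \<in> endK K C. \<forall>a\<in>C. comm C a u = fzero}"
| "Dord K C (Suc i) = {u \<in> endK K C. \<forall>a\<in>C. comm C a u \<in> Dord K C i}"

definition Diff :: "'f::field set \<Rightarrow> 'f set \<Rightarrow> ('f \<Rightarrow> 'f) set" where
  "Diff K C = (\<Union>i. Dord K C i)"

definition subalg_containing :: "('f::field \<Rightarrow> 'f) set \<Rightarrow> 'f set \<Rightarrow> 'f set \<Rightarrow> bool" where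
  "subalg_containing R K A \<longleftrightarrow> R \<subseteq> Diff K A \<and> mulop A ` A \<subseteq> R \<and>
     (\<forall>u\<in>R. \<forall>v\<in>R. fadd u v \<in> R \<and> u \<circ> v \<in> R) \<and> (\<forall>u\<in>R. fneg u \<in> R)"

definition left_denominator_set :: "('f::field \<Rightarrow> 'f) set \<Rightarrow> ('f \<Rightarrow> 'f) set \<Rightarrow> bool" where
  "left_denominator_set R S \<longleftrightarrow> S \<subseteq> R \<and>
     (\<forall>s\<in>S. \<forall>r\<in>R. \<exists>s'\<in>S. \<exists>r'\<in>R. s' \<circ> r = r' \<circ> s) \<and>
     (\<forall>s\<in>S. \<forall>r\<in>R. r \<circ> s = fzero \<longrightarrow> (\<exists>s'\<in>S. s' \<circ> r = fzero))"

definition right_denominator_set :: "('f::field \<Rightarrow> 'f) set \<Rightarrow> ('f \<Rightarrow> 'f) set \<Rightarrow> bool" where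
  "right_denominator_set R S \<longleftrightarrow> S \<subseteq> R \<and>
     (\<forall>s\<in>S. \<forall>r\<in>R. \<exists>s'\<in>S. \<exists>r'\<in>R. r \<circ> s' = s \<circ> r') \<and>
     (\<forall>s\<in>S. \<forall>r\<in>R. s \<circ> r = fzero \<longrightarrow> (\<exists>s'\<in>S. r \<circ> s' = fzero))"

definition regular_in :: "('f::field \<Rightarrow> 'f) set \<Rightarrow> ('f \<Rightarrow> 'f) \<Rightarrow> bool" where
  "regular_in R s \<longleftrightarrow> (\<forall>r\<in>R. s \<circ> r = fzero \<longrightarrow> r = fzero) \<and> (\<forall>r\<in>R. r \<circ> s = fzero \<longrightarrow> r = fzero)"

definition op_ring :: "('f::field \<Rightarrow> 'f) set \<Rightarrow> ('f \<Rightarrow> 'f) \<Rightarrow> bool" where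
  "op_ring Q one \<longleftrightarrow> one \<in> Q \<and> fzero \<in> Q \<and> (\<forall>u\<in>Q. \<forall>v\<in>Q. fadd u v \<in> Q \<and> u \<circ> v \<in> Q)
     \<and> (\<forall>u\<in>Q. fneg u \<in> Q) \<and> (\<forall>u\<in>Q. one \<circ> u = u \<and> u \<circ> one = u)"

definition frac_hom :: "('f::field \<Rightarrow> 'f) set \<Rightarrow> ('f \<Rightarrow> 'f) \<Rightarrow> ('f \<Rightarrow> 'f) set \<Rightarrow> ('f \<Rightarrow> 'f)
     \<Rightarrow> (('f \<Rightarrow> 'f) \<Rightarrow> ('f \<Rightarrow> 'f)) \<Rightarrow> bool" where
  "frac_hom R oneR Q oneQ \<phi> \<longleftrightarrow> op_ring Q oneQ \<and> (\<forall>r\<in>R. \<phi> r \<in> Q) \<and> \<phi> oneR = oneQ \<and>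
     (\<forall>r\<in>R. \<forall>r'\<in>R. \<phi> (fadd r r') = fadd (\<phi> r) (\<phi> r') \<and> \<phi> (r \<circ> r') = \<phi> r \<circ> \<phi> r')"

text \<open>Q (via phi) is a left ring of fractions S^{-1}R (elements s^{-1} r), resp. a right ring of
 fractions R S^{-1} (elements r s^{-1}); this characterizes the Ore localization up to iso.\<close>
definition left_ring_of_fractions where
  "left_ring_of_fractions R oneR S Q oneQ \<phi> \<longleftrightarrow> frac_hom R oneR Q oneQ \<phi> \<and>
     (\<forall>s\<in>S. \<exists>t\<in>Q. t \<circ> \<phi> s = oneQ \<and> \<phi> s \<circ> t = oneQ) \<and>
     (\<forall>q\<in>Q. \<exists>s\<in>S. \<exists>r\<in>R. \<phi> s \<circ> q = \<phi> r) \<and>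
     (\<forall>r\<in>R. \<phi> r = fzero \<longleftrightarrow> (\<exists>s\<in>S. s \<circ> r = fzero))"

definition right_ring_of_fractions where
  "right_ring_of_fractions R oneR S Q oneQ \<phi> \<longleftrightarrow> frac_hom R oneR Q oneQ \<phi> \<and>
     (\<forall>s\<in>S. \<exists>t\<in>Q. t \<circ> \<phi> s = oneQ \<and> \<phi> s \<circ> t = oneQ) \<and>
     (\<forall>q\<in>Q. \<exists>s\<in>S. \<exists>r\<in>R. q \<circ> \<phi> s = \<phi> r) \<and>
     (\<forall>r\<in>R. \<phi> r = fzero \<longleftrightarrow> (\<exists>s\<in>S. r \<circ> s = fzero))"

definition ext_op :: "'f::field set \<Rightarrow> 'f set \<Rightarrow> 'f set \<Rightarrow> ('f \<Rightarrow> 'f) \<Rightarrow> ('f \<Rightarrow> 'f)" where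
  "ext_op K A SA d = (THE e. e \<in> Diff K SA \<and> (\<forall>y\<in>A. e y = d y))"

text \<open>The image of S^{-1}R inside D(S^{-1}A): operators of the form s^{-1} r.\<close>
definition frac_image where
  "frac_image Q \<phi> R S = {q \<in> Q. \<exists>s\<in>S. \<exists>r\<in>R. \<phi> s \<circ> q = \<phi> r}"

definition left_submodule :: "('f::field \<Rightarrow> 'f) set \<Rightarrow> ('f \<Rightarrow> 'f) set \<Rightarrow> ('f \<Rightarrow> 'f) set \<Rightarrow> bool" where
  "left_submodule R M N \<longleftrightarrow> N \<subseteq> M \<and> fzero \<in> N \<and> (\<forall>u\<in>N. \<forall>v\<in>N. fadd u v \<in> N)
     \<and> (\<forall>r\<in>R. \<forall>u\<in>N. r \<circ> u \<in> N)"

definition right_submodule :: "('f::field \<Rightarrow> 'f) set \<Rightarrow> ('f \<Rightarrow> 'f) set \<Rightarrow> ('f \<Rightarrow> 'f) set \<Rightarrow> bool" where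
  "right_submodule R M N \<longleftrightarrow> N \<subseteq> M \<and> fzero \<in> N \<and> (\<forall>u\<in>N. \<forall>v\<in>N. fadd u v \<in> N)
     \<and> (\<forall>r\<in>R. \<forall>u\<in>N. u \<circ> r \<in> N)"

definition essential_left :: "('f::field \<Rightarrow> 'f) set \<Rightarrow> ('f \<Rightarrow> 'f) set \<Rightarrow> ('f \<Rightarrow> 'f) set \<Rightarrow> bool" where
  "essential_left R M N \<longleftrightarrow> left_submodule R M N \<and>
     (\<forall>N'. left_submodule R M N' \<and> N' \<noteq> {fzero} \<longrightarrow> N \<inter> N' \<noteq> {fzero})"

definition essential_right :: "('f::field \<Rightarrow> 'f) set \<Rightarrow> ('f \<Rightarrow> 'f) set \<Rightarrow> ('f \<Rightarrow> 'f) set \<Rightarrow> bool" where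
  "essential_right R M N \<longleftrightarrow> right_submodule R M N \<and>
     (\<forall>N'. right_submodule R M N' \<and> N' \<noteq> {fzero} \<longrightarrow> N \<inter> N' \<noteq> {fzero})"

end

theory Submission
  imports Defs
begin

lemma sr0[simp]: "sub_ring C \<Longrightarrow> 0 \<in> C" and sr1[simp]: "sub_ring C \<Longrightarrow> 1 \<in> C"
  unfolding sub_ring_def by blast+
lemma sradd[intro,simp]: "sub_ring C \<Longrightarrow> x \<in> C \<Longrightarrow> y \<in> C \<Longrightarrow> x + y \<in> C"
  unfolding sub_ring_def by blast
lemma srmul[intro,simp]: "sub_ring C \<Longrightarrow> x \<in> C \<Longrightarrow> y \<in> C \<Longrightarrow> x * y \<in> C"
  unfolding sub_ring_def by blast
lemma srneg[intro,simp]: "sub_ring C \<Longrightarrow> x \<in> C \<Longrightarrow> - x \<in> C"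
  unfolding sub_ring_def by blast
lemma srdiff[intro,simp]: "sub_ring C \<Longrightarrow> x \<in> C \<Longrightarrow> y \<in> C \<Longrightarrow> x - y \<in> C"
  using sradd[of C x "-y"] srneg[of C y] by simp

lemma endK_out: "u \<in> endK K C \<Longrightarrow> x \<notin> C \<Longrightarrow> u x = 0" by (simp add: endK_def)
lemma endK_in: "u \<in> endK K C \<Longrightarrow> x \<in> C \<Longrightarrow> u x \<in> C" by (simp add: endK_def)
lemma endK_add: "u \<in> endK K C \<Longrightarrow> x \<in> C \<Longrightarrow> y \<in> C \<Longrightarrow> u (x + y) = u x + u y" by (simp add: endK_def)
lemma endK_K: "u \<in> endK K C \<Longrightarrow> k \<in> K \<Longrightarrow> x \<in> C \<Longrightarrow> u (k * x) = k * u x" by (simp add: endK_def)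
lemma endK_0: "sub_ring C \<Longrightarrow> u \<in> endK K C \<Longrightarrow> u 0 = 0"
proof -
  assume "sub_ring C" "u \<in> endK K C"
  then have "u 0 + 0 = u 0 + u 0" using endK_add[of u K C 0 0] by simp
  then show ?thesis by (metis add_left_cancel)
qed
lemma endK_neg: "sub_ring C \<Longrightarrow> u \<in> endK K C \<Longrightarrow> x \<in> C \<Longrightarrow> u (- x) = - u x"
proof -
  assume "sub_ring C" "u \<in> endK K C" "x \<in> C"
  then have "u x + u (- x) = 0" using endK_add[of u K C x "-x"] endK_0[of C u K] by simp
  then show ?thesis by (metis add.commute eq_neg_iff_add_eq_0)
qed
lemma endK_diff: "sub_ring C \<Longrightarrow> u \<in> endK K C \<Longrightarrow> x \<in> C \<Longrightarrow> y \<in> C \<Longrightarrow> u (x - y) = u x - u y"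
  using endK_add[of u K C x "-y"] endK_neg[of C u K y] by simp

lemma comm_eq: "sub_ring C \<Longrightarrow> u \<in> endK K C \<Longrightarrow> a \<in> C \<Longrightarrow>
   comm C a u x = (if x \<in> C then a * u x - u (a * x) else 0)"
  by (auto simp: comm_def mulop_def endK_in endK_out endK_0)

lemma fzero_endK[simp]: "sub_ring C \<Longrightarrow> fzero \<in> endK K C"
  by (auto simp: endK_def fzero_def)

lemma comm_endK: "sub_ring C \<Longrightarrow> K \<subseteq> C \<Longrightarrow> u \<in> endK K C \<Longrightarrow> a \<in> C \<Longrightarrow> comm C a u \<in> endK K C"
proof -
  assume C: "sub_ring C" and KC: "K \<subseteq> C" and u: "u \<in> endK K C" and a: "a \<in> C"
  show ?thesis unfolding endK_def
  proof (intro CollectI conjI ballI allI impI)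
    fix x y k
    show "x \<notin> C \<Longrightarrow> comm C a u x = 0" using comm_eq[OF C u a] by simp
    show "x \<in> C \<Longrightarrow> comm C a u x \<in> C" using comm_eq[OF C u a] C u a by (simp add: endK_in)
    show "x \<in> C \<Longrightarrow> y \<in> C \<Longrightarrow> comm C a u (x + y) = comm C a u x + comm C a u y"
      using comm_eq[OF C u a] C u a by (simp add: endK_add distrib_left)
    show "k \<in> K \<Longrightarrow> x \<in> C \<Longrightarrow> comm C a u (k * x) = k * comm C a u x"
    proof -
      assume k: "k \<in> K" and x: "x \<in> C"
      have "u (a * (k * x)) = k * u (a * x)"
        using endK_K[OF u k, of "a*x"] C a x by (simp add: ac_simps)
      moreover have "k * x \<in> C" using KC k x C by auto
      ultimately show ?thesis using comm_eq[OF C u a] C u a x k by (simp add: endK_K algebra_simps)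
    qed
  qed
qed


definition Dm :: "'f::field set \<Rightarrow> 'f set \<Rightarrow> nat \<Rightarrow> ('f \<Rightarrow> 'f) set" where
  "Dm K C i = (if i = 0 then {fzero} else Dord K C (i - 1))"

lemma Dm_0[simp]: "Dm K C 0 = {fzero}" by (simp add: Dm_def)

lemma Dm_Suc: "u \<in> Dm K C (Suc i) \<longleftrightarrow> u \<in> endK K C \<and> (\<forall>a\<in>C. comm C a u \<in> Dm K C i)"
  by (cases i) (auto simp: Dm_def)

lemma comm_fzero[simp]: "comm C a fzero = fzero"
  by (simp add: comm_def mulop_def fzero_def fun_eq_iff)

lemma fzero_Dm[simp]: "sub_ring C \<Longrightarrow> fzero \<in> Dm K C i"
  by (induction i) (auto simp: Dm_Suc)

lemma Dm_endK: "sub_ring C \<Longrightarrow> u \<in> Dm K C i \<Longrightarrow> u \<in> endK K C"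
  by (cases i) (auto simp: Dm_Suc)

lemma Dm_mono: "sub_ring C \<Longrightarrow> Dm K C i \<subseteq> Dm K C (Suc i)"
proof (induction i)
  case 0 then show ?case by (auto simp: Dm_Suc)
next
  case (Suc i)
  show ?case
  proof
    fix u assume "u \<in> Dm K C (Suc i)"
    then have "u \<in> endK K C" "\<forall>a\<in>C. comm C a u \<in> Dm K C i" by (simp_all add: Dm_Suc)
    with Suc show "u \<in> Dm K C (Suc (Suc i))" by (subst Dm_Suc) blast
  qed
qed

lemma Dm_mono_le: "sub_ring C \<Longrightarrow> i \<le> j \<Longrightarrow> Dm K C i \<subseteq> Dm K C j"
proof (induction j)
  case 0 then show ?case by simp
next
  case (Suc j) then show ?case using Dm_mono[of C K j] by (cases "i = Suc j") auto
qed

lemma Diff_Dm: "sub_ring C \<Longrightarrow> Diff K C = (\<Union>i. Dm K C i)"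
proof -
  assume C: "sub_ring C"
  have "Dord K C i = Dm K C (Suc i)" for i by (simp add: Dm_def)
  moreover have "fzero \<in> Dm K C 1" using C by simp
  moreover have "Dm K C i \<subseteq> (\<Union>i. Dord K C i)" for i
    using calculation by (cases i) auto
  ultimately show ?thesis unfolding Diff_def by blast
qed

lemma fadd_endK: "sub_ring C \<Longrightarrow> u \<in> endK K C \<Longrightarrow> v \<in> endK K C \<Longrightarrow> fadd u v \<in> endK K C"
  by (auto simp: endK_def fadd_def algebra_simps)
lemma fneg_endK: "sub_ring C \<Longrightarrow> u \<in> endK K C \<Longrightarrow> fneg u \<in> endK K C"
  by (auto simp: endK_def fneg_def algebra_simps)
lemma comp_endK: "sub_ring C \<Longrightarrow> u \<in> endK K C \<Longrightarrow> v \<in> endK K C \<Longrightarrow> u \<circ> v \<in> endK K C"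
  by (auto simp: endK_def endK_0)

lemma comm_fadd: "sub_ring C \<Longrightarrow> u \<in> endK K C \<Longrightarrow> v \<in> endK K C \<Longrightarrow> a \<in> C \<Longrightarrow>
   comm C a (fadd u v) = fadd (comm C a u) (comm C a v)"
proof -
  assume C: "sub_ring C" and u: "u \<in> endK K C" and v: "v \<in> endK K C" and a: "a \<in> C"
  have uv: "fadd u v \<in> endK K C" using C u v by (rule fadd_endK)
  show ?thesis unfolding fun_eq_iff comm_eq[OF C uv a] comm_eq[OF C u a] comm_eq[OF C v a]
    by (simp add: fadd_def algebra_simps endK_add[OF u] endK_add[OF v] C a)
qed
lemma comm_fneg: "sub_ring C \<Longrightarrow> u \<in> endK K C \<Longrightarrow> a \<in> C \<Longrightarrow>
   comm C a (fneg u) = fneg (comm C a u)"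
proof -
  assume C: "sub_ring C" and u: "u \<in> endK K C" and a: "a \<in> C"
  have uv: "fneg u \<in> endK K C" using C u by (rule fneg_endK)
  show ?thesis unfolding fun_eq_iff comm_eq[OF C uv a] comm_eq[OF C u a]
    by (simp add: fneg_def algebra_simps endK_neg[OF C u] C a)
qed
lemma comm_comp: "sub_ring C \<Longrightarrow> u \<in> endK K C \<Longrightarrow> v \<in> endK K C \<Longrightarrow> a \<in> C \<Longrightarrow>
   comm C a (u \<circ> v) = fadd (comm C a u \<circ> v) (u \<circ> comm C a v)"
proof -
  assume C: "sub_ring C" and u: "u \<in> endK K C" and v: "v \<in> endK K C" and a: "a \<in> C"
  have uv: "u \<circ> v \<in> endK K C" using C u v by (rule comp_endK)
  show ?thesis
  proof (rule ext)
    fix x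
    show "comm C a (u \<circ> v) x = fadd (comm C a u \<circ> v) (u \<circ> comm C a v) x"
    proof (cases "x \<in> C")
      case True
      then show ?thesis using C u v a uv
        by (simp add: comm_eq[of C _ K] comm_endK fadd_def endK_in endK_diff)
    next
      case False
      then show ?thesis using C u v a uv
        by (simp add: comm_eq[of C _ K] fadd_def endK_out endK_0)
    qed
  qed
qed

lemma fadd_Dm: "sub_ring C \<Longrightarrow> u \<in> Dm K C i \<Longrightarrow> v \<in> Dm K C i \<Longrightarrow> fadd u v \<in> Dm K C i"
proof (induction i arbitrary: u v)
  case 0 then show ?case by (simp add: fadd_def fzero_def)
next
  case (Suc i)
  then show ?case by (auto simp: Dm_Suc fadd_endK comm_fadd)
qed

lemma fneg_Dm: "sub_ring C \<Longrightarrow> u \<in> Dm K C i \<Longrightarrow> fneg u \<in> Dm K C i"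
proof (induction i arbitrary: u)
  case 0 then show ?case by (simp add: fneg_def fzero_def)
next
  case (Suc i)
  then show ?case by (auto simp: Dm_Suc fneg_endK comm_fneg)
qed

lemma fzero_comp[simp]: "fzero \<circ> v = fzero" by (simp add: fzero_def fun_eq_iff)
lemma comp_fzero: "sub_ring C \<Longrightarrow> u \<in> endK K C \<Longrightarrow> u \<circ> fzero = fzero"
  by (simp add: fzero_def fun_eq_iff endK_0)
lemma fadd_fzero[simp]: "fadd fzero fzero = fzero" by (simp add: fzero_def fadd_def)

lemma comp_Dm_aux: "sub_ring C \<Longrightarrow> \<forall>u v i j. i + j = n \<longrightarrow> u \<in> Dm K C (Suc i) \<longrightarrow> v \<in> Dm K C (Suc j)
   \<longrightarrow> u \<circ> v \<in> Dm K C (Suc n)"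
proof (induction n)
  case 0
  show ?case
  proof (intro allI impI)
    fix u v i j assume "i + j = (0::nat)" "u \<in> Dm K C (Suc i)" "v \<in> Dm K C (Suc j)"
    then show "u \<circ> v \<in> Dm K C (Suc 0)" using 0
      by (auto simp: Dm_Suc comp_endK comm_comp comp_fzero)
  qed
next
  case (Suc n)
  have IH: "\<forall>u v i j. i + j = n \<longrightarrow> u \<in> Dm K C (Suc i) \<longrightarrow> v \<in> Dm K C (Suc j)
   \<longrightarrow> u \<circ> v \<in> Dm K C (Suc n)" using Suc.IH Suc.prems by blast
  show ?case
  proof (intro allI impI)
    fix u v i j assume ij: "i + j = Suc n" and u: "u \<in> Dm K C (Suc i)" and v: "v \<in> Dm K C (Suc j)"
    have ue: "u \<in> endK K C" and ve: "v \<in> endK K C" using u v by (auto simp: Dm_Suc)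
    have "comm C a u \<circ> v \<in> Dm K C (Suc n)" if a: "a \<in> C" for a
    proof (cases i)
      case 0 then show ?thesis using u a Suc.prems by (simp add: Dm_Suc)
    next
      case (Suc i')
      then have "comm C a u \<in> Dm K C (Suc i')" using u a by (simp add: Dm_Suc[of _ _ _ "Suc i'"])
      then show ?thesis using IH[rule_format, of i' j "comm C a u" v] v ij Suc by auto
    qed
    moreover have "u \<circ> comm C a v \<in> Dm K C (Suc n)" if a: "a \<in> C" for a
    proof (cases j)
      case 0 then show ?thesis using v a Suc.prems ue by (simp add: Dm_Suc comp_fzero)
    next
      case (Suc j')
      then have "comm C a v \<in> Dm K C (Suc j')" using v a by (simp add: Dm_Suc[of _ _ _ "Suc j'"])
      then show ?thesis using IH[rule_format, of i j' u "comm C a v"] u ij Suc by auto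
    qed
    ultimately show "u \<circ> v \<in> Dm K C (Suc (Suc n))"
      using ue ve Suc.prems by (auto simp: Dm_Suc[of _ _ _ "Suc n"] comp_endK comm_comp fadd_Dm)
  qed
qed

lemma comp_Dm: "sub_ring C \<Longrightarrow> u \<in> Dm K C (Suc i) \<Longrightarrow> v \<in> Dm K C (Suc j) \<Longrightarrow> u \<circ> v \<in> Dm K C (Suc (i + j))"
  using comp_Dm_aux by blast

lemma comp_Diff: "sub_ring C \<Longrightarrow> u \<in> Diff K C \<Longrightarrow> v \<in> Diff K C \<Longrightarrow> u \<circ> v \<in> Diff K C"
proof -
  assume C: "sub_ring C" and u: "u \<in> Diff K C" and v: "v \<in> Diff K C"
  obtain i j where "u \<in> Dm K C i" "v \<in> Dm K C j" using u v Diff_Dm[OF C] by auto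
  then have "u \<in> Dm K C (Suc i)" "v \<in> Dm K C (Suc j)" using Dm_mono[OF C] by auto
  then have "u \<circ> v \<in> Dm K C (Suc (i+j))" by (rule comp_Dm[OF C])
  then show ?thesis using Diff_Dm[OF C] by auto
qed

lemma fadd_Diff: "sub_ring C \<Longrightarrow> u \<in> Diff K C \<Longrightarrow> v \<in> Diff K C \<Longrightarrow> fadd u v \<in> Diff K C"
proof -
  assume C: "sub_ring C" and u: "u \<in> Diff K C" and v: "v \<in> Diff K C"
  obtain i j where "u \<in> Dm K C i" "v \<in> Dm K C j" using u v Diff_Dm[OF C] by auto
  then have "u \<in> Dm K C (i+j)" "v \<in> Dm K C (i+j)"
    using Dm_mono_le[OF C, of i "i+j" K] Dm_mono_le[OF C, of j "i+j" K] by auto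
  then have "fadd u v \<in> Dm K C (i+j)" by (rule fadd_Dm[OF C])
  then show ?thesis using Diff_Dm[OF C] by auto
qed

lemma fneg_Diff: "sub_ring C \<Longrightarrow> u \<in> Diff K C \<Longrightarrow> fneg u \<in> Diff K C"
  using fneg_Dm Diff_Dm by fastforce

lemma fzero_Diff: "sub_ring C \<Longrightarrow> fzero \<in> Diff K C"
  using Diff_Dm by fastforce

lemma Diff_endK: "sub_ring C \<Longrightarrow> u \<in> Diff K C \<Longrightarrow> u \<in> endK K C"
  using Diff_Dm Dm_endK by fastforce

lemma mulop_endK: "sub_ring C \<Longrightarrow> K \<subseteq> C \<Longrightarrow> a \<in> C \<Longrightarrow> mulop C a \<in> endK K C"
  by (auto simp: endK_def mulop_def algebra_simps subset_iff)

lemma mulop_Dm1: "sub_ring C \<Longrightarrow> K \<subseteq> C \<Longrightarrow> a \<in> C \<Longrightarrow> mulop C a \<in> Dm K C (Suc 0)"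
proof -
  assume C: "sub_ring C" and KC: "K \<subseteq> C" and a: "a \<in> C"
  have m: "mulop C a \<in> endK K C" using C KC a by (rule mulop_endK)
  have "comm C b (mulop C a) = fzero" if b: "b \<in> C" for b
    unfolding fun_eq_iff comm_eq[OF C m b] by (simp add: fzero_def mulop_def b C a)
  then show ?thesis using m by (simp add: Dm_Suc)
qed

lemma mulop_Diff: "sub_ring C \<Longrightarrow> K \<subseteq> C \<Longrightarrow> a \<in> C \<Longrightarrow> mulop C a \<in> Diff K C"
  using mulop_Dm1[of C K a] Diff_Dm[of C K] by blast

lemma mulop_comp_Dm: "sub_ring C \<Longrightarrow> K \<subseteq> C \<Longrightarrow> a \<in> C \<Longrightarrow> u \<in> Dm K C n \<Longrightarrow> mulop C a \<circ> u \<in> Dm K C n"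
proof (cases n)
  case 0 then show "sub_ring C \<Longrightarrow> K \<subseteq> C \<Longrightarrow> a \<in> C \<Longrightarrow> u \<in> Dm K C n \<Longrightarrow> mulop C a \<circ> u \<in> Dm K C n"
    by (simp add: fun_eq_iff fzero_def mulop_def)
next
  case (Suc m) then show "sub_ring C \<Longrightarrow> K \<subseteq> C \<Longrightarrow> a \<in> C \<Longrightarrow> u \<in> Dm K C n \<Longrightarrow> mulop C a \<circ> u \<in> Dm K C n"
    using comp_Dm[of C "mulop C a" K 0 u m] mulop_Dm1[of C K a] by simp
qed

lemma comp_mulop_Dm: "sub_ring C \<Longrightarrow> K \<subseteq> C \<Longrightarrow> a \<in> C \<Longrightarrow> u \<in> Dm K C n \<Longrightarrow> u \<circ> mulop C a \<in> Dm K C n"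
proof (cases n)
  case 0 then show "sub_ring C \<Longrightarrow> K \<subseteq> C \<Longrightarrow> a \<in> C \<Longrightarrow> u \<in> Dm K C n \<Longrightarrow> u \<circ> mulop C a \<in> Dm K C n"
    by (simp add: fun_eq_iff fzero_def mulop_def)
next
  case (Suc m) then show "sub_ring C \<Longrightarrow> K \<subseteq> C \<Longrightarrow> a \<in> C \<Longrightarrow> u \<in> Dm K C n \<Longrightarrow> u \<circ> mulop C a \<in> Dm K C n"
    using comp_Dm[of C u K m "mulop C a" 0] mulop_Dm1[of C K a] by simp
qed


lemma endK_range: "sub_ring C \<Longrightarrow> u \<in> endK K C \<Longrightarrow> u x \<in> C"
  by (cases "x \<in> C") (auto simp: endK_in endK_out)

lemma mulop_in[simp]: "y \<in> C \<Longrightarrow> mulop C a y = a * y" by (simp add: mulop_def)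
lemma mulop_out: "y \<notin> C \<Longrightarrow> mulop C a y = 0" by (simp add: mulop_def)

lemma mulop_mult: "sub_ring C \<Longrightarrow> b \<in> C \<Longrightarrow> mulop C (a * b) = mulop C a \<circ> mulop C b"
  by (auto simp: fun_eq_iff mulop_def)

lemma comm_as: "comm C s u = fadd (mulop C s \<circ> u) (fneg (u \<circ> mulop C s))"
  by (simp add: comm_def fadd_def fneg_def fun_eq_iff)

lemma diff_swap: "a - b = (c::'a::ab_group_add) \<Longrightarrow> b = a - c" by auto

lemma vanish:
  assumes C: "sub_ring C" and BC: "B \<subseteq> C" and XC: "X \<subseteq> C"
    and BX: "\<forall>b\<in>B. \<forall>x\<in>X. b * x \<in> X" and reach: "\<forall>c\<in>C. \<exists>b\<in>B. b \<noteq> 0 \<and> b * c \<in> X"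
  shows "r \<in> Dm K C i \<Longrightarrow> \<forall>x\<in>X. r x = 0 \<Longrightarrow> r = fzero"
proof (induction i arbitrary: r)
  case 0 then show ?case by simp
next
  case (Suc i)
  have re: "r \<in> endK K C" using Suc.prems by (simp add: Dm_Suc)
  have cb: "comm C b r = fzero" if b: "b \<in> B" for b
  proof (rule Suc.IH)
    show "comm C b r \<in> Dm K C i" using Suc.prems b BC by (auto simp: Dm_Suc)
    show "\<forall>x\<in>X. comm C b r x = 0"
    proof
      fix x assume x: "x \<in> X"
      have "b * x \<in> X" using BX b x by blast
      then show "comm C b r x = 0" using comm_eq[OF C re, of b x] b BC x XC Suc.prems by auto
    qed
  qed
  show ?case
  proof (rule ext)
    fix c show "r c = fzero c"
    proof (cases "c \<in> C")
      case False then show ?thesis using re by (simp add: endK_out fzero_def)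
    next
      case True
      then obtain b where b: "b \<in> B" "b \<noteq> 0" "b * c \<in> X" using reach by blast
      have "comm C b r c = 0" using cb[OF b(1)] by (simp add: fzero_def)
      then have "b * r c = r (b * c)" using comm_eq[OF C re, of b c] True b BC by auto
      also have "\<dots> = 0" using Suc.prems b by blast
      finally show ?thesis using b by (simp add: fzero_def)
    qed
  qed
qed

lemma regular_right:
  assumes C: "sub_ring C" and s: "s \<in> C" "s \<noteq> 0" and r: "r \<in> Dm K C i"
    and z: "r \<circ> mulop C s = fzero"
  shows "r = fzero"
proof (rule vanish[OF C _ _ _ _ r])
  show "C \<subseteq> C" by simp
  show "{s * x | x. x \<in> C} \<subseteq> C" using C s by auto
  show "\<forall>b\<in>C. \<forall>x\<in>{s * x | x. x \<in> C}. b * x \<in> {s * x | x. x \<in> C}"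
  proof (intro ballI)
    fix b z assume b: "b \<in> C" and "z \<in> {s * x | x. x \<in> C}"
    then obtain y where y: "y \<in> C" "z = s * y" by auto
    then show "b * z \<in> {s * x | x. x \<in> C}" using C b by (auto intro!: exI[of _ "b*y"] simp: ac_simps)
  qed
  show "\<forall>c\<in>C. \<exists>b\<in>C. b \<noteq> 0 \<and> b * c \<in> {s * x | x. x \<in> C}" using s by auto
  show "\<forall>x\<in>{s * x | x. x \<in> C}. r x = 0"
  proof
    fix y assume "y \<in> {s * x | x. x \<in> C}"
    then obtain x where "x \<in> C" "y = s * x" by auto
    then show "r y = 0" using fun_cong[OF z, of x] by (simp add: fzero_def)
  qed
qed

lemma regular_left:
  assumes C: "sub_ring C" and s: "s \<noteq> 0" and r: "r \<in> endK K C"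
    and z: "mulop C s \<circ> r = fzero"
  shows "r = fzero"
proof (rule ext)
  fix x
  have "mulop C s (r x) = 0" using fun_cong[OF z, of x] by (simp add: fzero_def)
  then show "r x = fzero x" using endK_range[OF C r, of x] s by (simp add: fzero_def)
qed

lemma pow_in: "mult_closed S \<Longrightarrow> s \<in> S \<Longrightarrow> s ^ n \<in> S"
  by (induction n) (auto simp: mult_closed_def)

lemma subalg_basic:
  assumes "subalg_containing R K C"
  shows "R \<subseteq> Diff K C" "\<And>a. a \<in> C \<Longrightarrow> mulop C a \<in> R"
    "\<And>u v. u \<in> R \<Longrightarrow> v \<in> R \<Longrightarrow> fadd u v \<in> R" "\<And>u v. u \<in> R \<Longrightarrow> v \<in> R \<Longrightarrow> u \<circ> v \<in> R"
    "\<And>u. u \<in> R \<Longrightarrow> fneg u \<in> R"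
  using assms by (auto simp: subalg_containing_def)

lemma mulop_0: "sub_ring C \<Longrightarrow> mulop C 0 = fzero" by (simp add: fun_eq_iff mulop_def fzero_def)

lemma fzero_R: "sub_ring C \<Longrightarrow> subalg_containing R K C \<Longrightarrow> fzero \<in> R"
  using subalg_basic(2)[of R K C 0] mulop_0[of C] by simp

lemma ore_right:
  assumes C: "sub_ring C" and KC: "K \<subseteq> C" and R: "subalg_containing R K C" and s: "s \<in> C"
  shows "u \<in> R \<Longrightarrow> u \<in> Dm K C n \<Longrightarrow> \<exists>r'\<in>R. u \<circ> mulop C (s ^ n) = mulop C s \<circ> r'"
proof (induction n arbitrary: u)
  case 0 then show ?case using fzero_R[OF C R] C
    by (intro bexI[of _ fzero]) (auto simp: fun_eq_iff fzero_def mulop_def)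
next
  case (Suc n)
  have ue: "u \<in> endK K C" using Suc.prems by (simp add: Dm_Suc)
  define w where "w = comm C s u"
  have wR: "w \<in> R" unfolding w_def comm_as using Suc.prems s subalg_basic[OF R] by auto
  have wD: "w \<in> Dm K C n" unfolding w_def using Suc.prems s by (simp add: Dm_Suc)
  obtain r'' where r'': "r'' \<in> R" "w \<circ> mulop C (s ^ n) = mulop C s \<circ> r''" using Suc.IH[OF wR wD] by blast
  have r''e: "r'' \<in> endK K C" using r'' subalg_basic(1)[OF R] Diff_endK[OF C] by blast
  have sn: "s ^ n \<in> C" using s C by (induction n) auto
  define r' where "r' = fadd (u \<circ> mulop C (s ^ n)) (fneg r'')"
  have "r' \<in> R" unfolding r'_def using subalg_basic[OF R] Suc.prems r'' sn by auto
  moreover have "u \<circ> mulop C (s ^ Suc n) = mulop C s \<circ> r'"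
  proof (rule ext)
    fix x
    let ?y = "mulop C (s ^ n) x"
    have y: "?y \<in> C" using sn C by (cases "x \<in> C") (auto simp: mulop_def)
    have wy: "w ?y = s * u ?y - u (s * ?y)" unfolding w_def using comm_eq[OF C ue s] y by simp
    have "w ?y = s * r'' x" using fun_cong[OF r''(2), of x] endK_range[OF C r''e] by simp
    then have "u (s * ?y) = s * u ?y - s * r'' x" using wy by (intro diff_swap) simp
    moreover have "mulop C (s ^ Suc n) x = s * ?y"
      using mulop_mult[OF C sn, of s] by (simp add: y)
    ultimately show "(u \<circ> mulop C (s ^ Suc n)) x = (mulop C s \<circ> r') x"
      unfolding r'_def using endK_range[OF C ue] endK_range[OF C r''e] C
      by (simp add: fadd_def fneg_def algebra_simps)
  qed
  ultimately show ?case by blast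
qed

lemma ore_left:
  assumes C: "sub_ring C" and KC: "K \<subseteq> C" and R: "subalg_containing R K C" and s: "s \<in> C"
  shows "u \<in> R \<Longrightarrow> u \<in> Dm K C n \<Longrightarrow> \<exists>r'\<in>R. mulop C (s ^ n) \<circ> u = r' \<circ> mulop C s"
proof (induction n arbitrary: u)
  case 0 then show ?case using fzero_R[OF C R] C
    by (intro bexI[of _ fzero]) (auto simp: fun_eq_iff fzero_def mulop_def)
next
  case (Suc n)
  have ue: "u \<in> endK K C" using Suc.prems by (simp add: Dm_Suc)
  define w where "w = comm C s u"
  have wR: "w \<in> R" unfolding w_def comm_as using Suc.prems s subalg_basic[OF R] by auto
  have wD: "w \<in> Dm K C n" unfolding w_def using Suc.prems s by (simp add: Dm_Suc)
  have we: "w \<in> endK K C" using wD Dm_endK[OF C] by blast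
  obtain r2 where r2: "r2 \<in> R" "mulop C (s ^ n) \<circ> w = r2 \<circ> mulop C s" using Suc.IH[OF wR wD] by blast
  have r2e: "r2 \<in> endK K C" using r2 subalg_basic(1)[OF R] Diff_endK[OF C] by blast
  have sn: "s ^ n \<in> C" using s C by (induction n) auto
  define r' where "r' = fadd (mulop C (s ^ n) \<circ> u) r2"
  have "r' \<in> R" unfolding r'_def using subalg_basic[OF R] Suc.prems r2 sn by auto
  moreover have "mulop C (s ^ Suc n) \<circ> u = r' \<circ> mulop C s"
  proof (rule ext)
    fix x
    show "(mulop C (s ^ Suc n) \<circ> u) x = (r' \<circ> mulop C s) x"
    proof (cases "x \<in> C")
      case True
      have wx: "w x = s * u x - u (s * x)" unfolding w_def using comm_eq[OF C ue s] True by simp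
      have "s ^ n * w x = r2 (s * x)" using fun_cong[OF r2(2), of x] endK_range[OF C we] True by simp
      then show ?thesis unfolding r'_def using True wx endK_range[OF C ue] C s
        by (simp add: fadd_def algebra_simps)
    next
      case False
      have "r' \<in> endK K C" using \<open>r' \<in> R\<close> subalg_basic(1)[OF R] Diff_endK[OF C] by blast
      then show ?thesis using False ue C by (simp add: endK_out mulop_out endK_0)
    qed
  qed
  ultimately show ?case by blast
qed


locale setting =
  fixes K A S :: "'f::field set"
  assumes subK: "sub_field K" and KA: "K \<subseteq> A" and subA: "sub_ring A"
    and mcS: "mult_closed S" and SA: "S \<subseteq> A - {0}"
begin

abbreviation "L \<equiv> loc S A"

lemma S_A: "s \<in> S \<Longrightarrow> s \<in> A" and S_nz: "s \<in> S \<Longrightarrow> s \<noteq> 0"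
  using SA by auto
lemma S1: "1 \<in> S" and Smul: "s \<in> S \<Longrightarrow> t \<in> S \<Longrightarrow> s * t \<in> S"
  using mcS by (auto simp: mult_closed_def)

lemma locI: "x \<in> A \<Longrightarrow> s \<in> S \<Longrightarrow> x / s \<in> L" by (auto simp: loc_def)
lemma locE: "c \<in> L \<Longrightarrow> (\<And>x s. x \<in> A \<Longrightarrow> s \<in> S \<Longrightarrow> c = x / s \<Longrightarrow> P) \<Longrightarrow> P"
  by (auto simp: loc_def)

lemma A_L: "A \<subseteq> L"
proof
  fix x assume "x \<in> A" then show "x \<in> L" using locI[of x 1] S1 by simp
qed

lemma K_L: "K \<subseteq> L" using KA A_L by blast

lemma inv_L: "s \<in> S \<Longrightarrow> 1 / s \<in> L" using locI[of 1 s] subA by simp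

lemma L_ring: "sub_ring L"
proof -
  have "0 \<in> L" "1 \<in> L" using A_L subA by auto
  moreover have "x + y \<in> L \<and> x * y \<in> L" if "x \<in> L" "y \<in> L" for x y
  proof -
    obtain a s where a: "a \<in> A" "s \<in> S" "x = a / s" using \<open>x \<in> L\<close> by (rule locE)
    obtain b t where b: "b \<in> A" "t \<in> S" "y = b / t" using \<open>y \<in> L\<close> by (rule locE)
    have nz: "s \<noteq> 0" "t \<noteq> 0" using a b S_nz by auto
    have "x + y = (a * t + b * s) / (s * t)" using a b nz by (simp add: field_simps)
    moreover have "x * y = (a * b) / (s * t)" using a b by simp
    ultimately show ?thesis using a b subA S_A Smul by (auto intro!: locI)
  qed
  moreover have "- x \<in> L" if "x \<in> L" for x
  proof -
    obtain a s where a: "a \<in> A" "s \<in> S" "x = a / s" using \<open>x \<in> L\<close> by (rule locE)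
    moreover have "- a \<in> A" using a subA by auto
    ultimately show ?thesis using locI[of "- a" s] by simp
  qed
  ultimately show ?thesis unfolding sub_ring_def by blast
qed

lemma L_unique0:
  assumes e: "e \<in> Dm K L i" and z: "\<forall>y\<in>A. e y = 0"
  shows "e = fzero"
proof (rule vanish[OF L_ring _ _ _ _ e z])
  show "A \<subseteq> L" "A \<subseteq> L" by (rule A_L)+
  show "\<forall>b\<in>A. \<forall>x\<in>A. b * x \<in> A" using subA by auto
  show "\<forall>c\<in>L. \<exists>b\<in>A. b \<noteq> 0 \<and> b * c \<in> A"
  proof
    fix c assume "c \<in> L"
    then obtain x s where "x \<in> A" "s \<in> S" "c = x / s" by (rule locE)
    then show "\<exists>b\<in>A. b \<noteq> 0 \<and> b * c \<in> A" using S_A S_nz by (intro bexI[of _ s]) auto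
  qed
qed

lemma L_unique:
  assumes e1: "e1 \<in> Diff K L" and e2: "e2 \<in> Diff K L" and ag: "\<forall>y\<in>A. e1 y = e2 y"
  shows "e1 = e2"
proof -
  have "fadd e1 (fneg e2) \<in> Diff K L" using e1 e2 L_ring fadd_Diff fneg_Diff by blast
  then obtain i where "fadd e1 (fneg e2) \<in> Dm K L i" using Diff_Dm[OF L_ring] by auto
  moreover have "\<forall>y\<in>A. fadd e1 (fneg e2) y = 0" using ag by (simp add: fadd_def fneg_def)
  ultimately have "fadd e1 (fneg e2) = fzero" by (rule L_unique0)
  then show ?thesis by (simp add: fun_eq_iff fadd_def fneg_def fzero_def)
qed

lemma comm_Diff: "sub_ring C \<Longrightarrow> K \<subseteq> C \<Longrightarrow> a \<in> C \<Longrightarrow> u \<in> Diff K C \<Longrightarrow> comm C a u \<in> Diff K C"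
  unfolding comm_as using mulop_Diff comp_Diff fadd_Diff fneg_Diff by metis

end


locale ext_ctx = setting +
  fixes d :: "'a \<Rightarrow> 'a" and n :: nat and E :: "'a \<Rightarrow> 'a \<Rightarrow> 'a"
  assumes dD: "d \<in> Dm K A (Suc n)"
    and EA: "\<And>a. a \<in> A \<Longrightarrow> E a \<in> Dm K L n \<and> (\<forall>y\<in>A. E a y = comm A a d y)"
begin

lemma de: "d \<in> endK K A" using dD by (simp add: Dm_Suc)

lemma d_comm: "a \<in> A \<Longrightarrow> y \<in> A \<Longrightarrow> E a y = a * d y - d (a * y)"
  using EA comm_eq[OF subA de] by simp

lemma ED: "a \<in> A \<Longrightarrow> E a \<in> Dm K L n" using EA by blast
lemma Ee: "a \<in> A \<Longrightarrow> E a \<in> endK K L" using ED Dm_endK[OF L_ring] by blast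
lemma EDiff: "a \<in> A \<Longrightarrow> E a \<in> Diff K L" using ED Diff_Dm[OF L_ring] by blast

lemma J: assumes b: "b \<in> A" and t: "t \<in> A" shows "comm L b (E t) = comm L t (E b)"
proof (rule L_unique)
  show "comm L b (E t) \<in> Diff K L" using comm_Diff[OF L_ring K_L] EDiff t b A_L by blast
  show "comm L t (E b) \<in> Diff K L" using comm_Diff[OF L_ring K_L] EDiff t b A_L by blast
  show "\<forall>y\<in>A. comm L b (E t) y = comm L t (E b) y"
  proof
    fix y assume y: "y \<in> A"
    have by': "b * y \<in> A" "t * y \<in> A" using b t y subA by auto
    have bL: "b \<in> L" "t \<in> L" "y \<in> L" using A_L b t y by blast+
    have "comm L b (E t) y = b * E t y - E t (b * y)"
      using comm_eq[OF L_ring Ee[OF t] bL(1), of y] bL by simp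
    also have "\<dots> = b * (t * d y - d (t * y)) - (t * d (b * y) - d (t * (b * y)))"
      using d_comm t y by' by simp
    also have "\<dots> = t * (b * d y - d (b * y)) - (b * d (t * y) - d (b * (t * y)))"
      by (simp add: algebra_simps)
    also have "\<dots> = t * E b y - E b (t * y)"
      using d_comm b y by' by simp
    also have "\<dots> = comm L t (E b) y"
      using comm_eq[OF L_ring Ee[OF b] bL(2), of y] bL by simp
    finally show "comm L b (E t) y = comm L t (E b) y" .
  qed
qed

lemma Jp: assumes b: "b \<in> A" and t: "t \<in> A" and c: "c \<in> L"
  shows "b * E t c - E t (b * c) = t * E b c - E b (t * c)"
proof -
  have bL: "b \<in> L" "t \<in> L" using A_L b t by blast+
  show ?thesis
    using fun_cong[OF J[OF b t], of c] comm_eq[OF L_ring Ee[OF t] bL(1), of c] comm_eq[OF L_ring Ee[OF b] bL(2), of c]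
      c by simp
qed

lemma wd:
  assumes x: "x \<in> A" "s \<in> S" "c = x / s" and x': "x' \<in> A" "s' \<in> S" "c = x' / s'"
  shows "(d x + E s c) / s = (d x' + E s' c) / s'"
proof -
  have nz: "s \<noteq> 0" "s' \<noteq> 0" using x x' S_nz by auto
  have sA: "s \<in> A" "s' \<in> A" using x x' S_A by auto
  have c: "c \<in> L" using x locI by blast
  have xe1: "x = s * c" using x(3) nz(1) by simp
  have xe2: "x' = s' * c" using x'(3) nz(2) by simp
  note xe = xe1 xe2
  have h3: "s' * x = s * x'" using xe by simp
  have h1: "E s' x = s' * d x - d (s' * x)" using d_comm sA x by simp
  have h2: "E s x' = s * d x' - d (s * x')" using d_comm sA x' by simp
  have h4: "s * E s' c - E s' (s * c) = s' * E s c - E s (s' * c)" using Jp sA c by blast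
  have a1: "E s' x - E s x' = s' * d x - s * d x'" using h1 h2 h3 by simp
  have h4': "s * E s' c - E s' x = s' * E s c - E s x'" unfolding xe using h4 .
  have "s' * (d x + E s c) = s * (d x' + E s' c)" using a1 h4' by algebra
  then show ?thesis using nz by (simp add: field_simps)
qed

definition e :: "'a \<Rightarrow> 'a" where
  "e c = (if c \<in> L then (let p = SOME p. fst p \<in> A \<and> snd p \<in> S \<and> c = fst p / snd p in
      (d (fst p) + E (snd p) c) / snd p) else 0)"

lemma e_rep: assumes "x \<in> A" "s \<in> S" "c = x / s" shows "e c = (d x + E s c) / s"
proof -
  have c: "c \<in> L" using assms locI by blast
  let ?P = "\<lambda>p. fst p \<in> A \<and> snd p \<in> S \<and> c = fst p / snd p"
  have "?P (x, s)" using assms by simp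
  then have P: "?P (SOME p. ?P p)" by (rule someI)
  have "e c = (d (fst (SOME p. ?P p)) + E (snd (SOME p. ?P p)) c) / snd (SOME p. ?P p)"
    using c by (simp add: e_def Let_def)
  also have "\<dots> = (d x + E s c) / s" using wd P assms by blast
  finally show ?thesis .
qed

lemma e_out: "c \<notin> L \<Longrightarrow> e c = 0" by (simp add: e_def)

lemma e_endK: "e \<in> endK K L"
  unfolding endK_def
proof (intro CollectI conjI allI ballI impI)
  fix c assume "c \<notin> L" then show "e c = 0" by (rule e_out)
next
  fix c assume "c \<in> L"
  then obtain x s where xs: "x \<in> A" "s \<in> S" "c = x / s" by (rule locE)
  have "d x \<in> L" using endK_in[OF de xs(1)] A_L by blast
  moreover have "E s c \<in> L" using endK_range[OF L_ring Ee[OF S_A[OF xs(2)]]] .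
  ultimately have "d x + E s c \<in> L" using sradd[OF L_ring] by blast
  then have "(d x + E s c) * (1 / s) \<in> L" using srmul[OF L_ring _ inv_L[OF xs(2)]] by blast
  then show "e c \<in> L" using e_rep[OF xs] by simp
next
  fix c c' assume "c \<in> L" "c' \<in> L"
  obtain x s where xs: "x \<in> A" "s \<in> S" "c = x / s" using \<open>c \<in> L\<close> by (rule locE)
  obtain x' s' where xs': "x' \<in> A" "s' \<in> S" "c' = x' / s'" using \<open>c' \<in> L\<close> by (rule locE)
  have nz: "s \<noteq> 0" "s' \<noteq> 0" using xs xs' S_nz by auto
  have ss: "s * s' \<in> S" "s * s' \<in> A" using xs xs' Smul S_A by auto
  have A1: "x * s' \<in> A" "x' * s \<in> A" using xs xs' S_A subA by auto
  have r1: "c = (x * s') / (s * s')" and r2: "c' = (x' * s) / (s * s')" and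
    r3: "c + c' = (x * s' + x' * s) / (s * s')" using xs xs' nz by (auto simp: field_simps)
  have "e (c + c') = (d (x * s' + x' * s) + E (s * s') (c + c')) / (s * s')"
    using e_rep[OF _ ss(1) r3] A1 subA by auto
  also have "\<dots> = (d (x * s') + E (s * s') c) / (s * s') + (d (x' * s) + E (s * s') c') / (s * s')"
    using endK_add[OF de A1] endK_add[OF Ee[OF ss(2)] \<open>c \<in> L\<close> \<open>c' \<in> L\<close>]
    by (simp add: add_divide_distrib algebra_simps)
  also have "\<dots> = e c + e c'" using e_rep[OF A1(1) ss(1) r1] e_rep[OF A1(2) ss(1) r2] by simp
  finally show "e (c + c') = e c + e c'" .
next
  fix k c assume k: "k \<in> K" and "c \<in> L"
  obtain x s where xs: "x \<in> A" "s \<in> S" "c = x / s" using \<open>c \<in> L\<close> by (rule locE)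
  have kx: "k * x \<in> A" using k KA xs subA by auto
  have "e (k * c) = (d (k * x) + E s (k * c)) / s" using e_rep[OF kx xs(2)] xs by simp
  also have "\<dots> = k * ((d x + E s c) / s)"
    using endK_K[OF de k xs(1)] endK_K[OF Ee[OF S_A[OF xs(2)]] k \<open>c \<in> L\<close>] by (simp add: algebra_simps)
  also have "\<dots> = k * e c" using e_rep[OF xs] by simp
  finally show "e (k * c) = k * e c" .
qed

lemma e_agree: "y \<in> A \<Longrightarrow> e y = d y"
proof -
  assume y: "y \<in> A"
  have "e y = (d y + E 1 y) / 1" using e_rep[OF y S1] by simp
  also have "E 1 y = 0" using d_comm[of 1 y] y subA by simp
  finally show ?thesis by simp
qed

lemma e_commA: assumes b: "b \<in> A" shows "comm L b e = E b"
proof (rule ext)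
  fix c show "comm L b e c = E b c"
  proof (cases "c \<in> L")
    case False
    then show ?thesis using comm_eq[OF L_ring e_endK, of b c] b A_L endK_out[OF Ee[OF b]] by auto
  next
    case True
    obtain x s where xs: "x \<in> A" "s \<in> S" "c = x / s" using True by (rule locE)
    have nz: "s \<noteq> 0" using xs S_nz by auto
    have sA: "s \<in> A" using xs S_A by auto
    have bx: "b * x \<in> A" using b xs subA by auto
    have bc: "b * c = (b * x) / s" using xs by simp
    have x: "x = s * c" using xs nz by simp
    have "comm L b e c = b * e c - e (b * c)" using comm_eq[OF L_ring e_endK, of b c] b A_L True by auto
    also have "\<dots> = b * ((d x + E s c) / s) - (d (b * x) + E s (b * c)) / s"
      using e_rep[OF xs] e_rep[OF bx xs(2) bc] by simp
    also have "\<dots> = (b * (d x + E s c) - (d (b * x) + E s (b * c))) / s"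
      by (simp add: diff_divide_distrib)
    also have "\<dots> = (b * d x - d (b * x) + (b * E s c - E s (b * c))) / s"
      by (simp add: algebra_simps)
    also have "\<dots> = (E b (s * c) + (s * E b c - E b (s * c))) / s"
      using d_comm[OF b xs(1)] Jp[OF b sA True] x by simp
    also have "\<dots> = E b c" using nz by simp
    finally show ?thesis .
  qed
qed

lemma e_comm: assumes c: "c \<in> L" shows "comm L c e \<in> Dm K L n"
proof -
  obtain b t where bt: "b \<in> A" "t \<in> S" "c = b / t" using c by (rule locE)
  have nz: "t \<noteq> 0" using bt S_nz by auto
  have tA: "t \<in> A" using bt S_A by auto
  have it: "1 / t \<in> L" using inv_L bt by auto
  define F where "F = mulop L (1 / t) \<circ> fadd (E b) (fneg (E t \<circ> mulop L c))"
  have FD: "F \<in> Dm K L n" unfolding F_def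
    by (intro mulop_comp_Dm[OF L_ring K_L it] fadd_Dm[OF L_ring] fneg_Dm[OF L_ring] ED bt tA
        comp_mulop_Dm[OF L_ring K_L c])
  have "comm L c e = F"
  proof (rule ext)
    fix y show "comm L c e y = F y"
    proof (cases "y \<in> L")
      case False
      then show ?thesis using comm_eq[OF L_ring e_endK c, of y] endK_out[OF Ee[OF bt(1)]]
          endK_0[OF L_ring Ee[OF tA]] L_ring
        by (simp add: F_def fadd_def fneg_def mulop_out)
    next
      case True
      have cy: "c * y \<in> L" using c True L_ring by auto
      have by': "b * y \<in> L" using bt True L_ring A_L by auto
      have tc: "t * (c * y) = b * y" using bt nz by simp
      have h1: "E t (c * y) = t * e (c * y) - e (b * y)"
        using fun_cong[OF e_commA[OF tA], of "c * y"] comm_eq[OF L_ring e_endK, of t "c * y"] tA A_L cy tc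
        by auto
      have h2: "E b y = b * e y - e (b * y)"
        using fun_cong[OF e_commA[OF bt(1)], of y] comm_eq[OF L_ring e_endK, of b y] bt A_L True
        by auto
      have val: "E b y + - E t (c * y) \<in> L"
        using endK_range[OF L_ring Ee[OF bt(1)]] endK_range[OF L_ring Ee[OF tA]] L_ring by auto
      have "F y = (1 / t) * (E b y - E t (c * y))"
        using val True by (simp add: F_def fadd_def fneg_def)
      also have "\<dots> = (1 / t) * (b * e y - t * e (c * y))" using h1 h2 by simp
      also have "\<dots> = c * e y - e (c * y)" using bt nz by (simp add: field_simps)
      also have "\<dots> = comm L c e y" using comm_eq[OF L_ring e_endK c, of y] True by simp
      finally show ?thesis by simp
    qed
  qed
  then show ?thesis using FD by simp
qed

lemma e_Dm: "e \<in> Dm K L (Suc n)"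
  using e_endK e_comm by (simp add: Dm_Suc)

end

lemma (in setting) ext_exists: "d \<in> Dm K A n \<Longrightarrow> \<exists>e\<in>Dm K L n. \<forall>y\<in>A. e y = d y"
proof (induction n arbitrary: d)
  case 0 then show ?case using L_ring by auto
next
  case (Suc n)
  define E where "E a = (SOME e. e \<in> Dm K L n \<and> (\<forall>y\<in>A. e y = comm A a d y))" for a
  have EA: "E a \<in> Dm K L n \<and> (\<forall>y\<in>A. E a y = comm A a d y)" if a: "a \<in> A" for a
  proof -
    have "comm A a d \<in> Dm K A n" using Suc.prems a by (simp add: Dm_Suc)
    then have "\<exists>e. e \<in> Dm K L n \<and> (\<forall>y\<in>A. e y = comm A a d y)" using Suc.IH by blast
    then show ?thesis unfolding E_def by (rule someI_ex)
  qed
  interpret ext_ctx K A S d n E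
    by (unfold_locales; (rule Suc.prems EA)?; assumption)
  show ?case using e_Dm e_agree by blast
qed


context setting begin

lemma common_den:
  assumes "finite G" and "\<forall>g\<in>G. \<exists>s\<in>S. \<forall>y\<in>A. s * h g y \<in> A"
  shows "\<exists>s\<in>S. \<forall>g\<in>G. \<forall>y\<in>A. s * h g y \<in> A"
  using assms
proof (induction G rule: finite_induct)
  case empty then show ?case using S1 by blast
next
  case (insert g G)
  obtain s1 where s1: "s1 \<in> S" "\<forall>g\<in>G. \<forall>y\<in>A. s1 * h g y \<in> A" using insert by blast
  obtain s2 where s2: "s2 \<in> S" "\<forall>y\<in>A. s2 * h g y \<in> A" using insert.prems by blast
  have "s1 * s2 \<in> S" using s1 s2 Smul by blast
  moreover have "\<forall>g'\<in>insert g G. \<forall>y\<in>A. (s1 * s2) * h g' y \<in> A"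
  proof (intro ballI)
    fix g' y assume g': "g' \<in> insert g G" and y: "y \<in> A"
    show "(s1 * s2) * h g' y \<in> A"
    proof (cases "g' = g")
      case True
      have "s1 * (s2 * h g y) \<in> A" using s1 s2 y S_A subA by auto
      then show ?thesis using True by (simp add: mult.assoc)
    next
      case False
      then have "g' \<in> G" using g' by blast
      then have "s2 * (s1 * h g' y) \<in> A" using s1 s2 y S_A subA by auto
      then show ?thesis by (simp add: ac_simps)
    qed
  qed
  ultimately show ?case by blast
qed

lemma ft:
  assumes eft: "ess_finite_type K A"
  shows "q \<in> Dm K L n \<Longrightarrow> \<exists>s\<in>S. \<forall>y\<in>A. s * q y \<in> A"
proof (induction n arbitrary: q)
  case 0 then show ?case using S1 subA by (auto simp: fzero_def)
next
  case (Suc n)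
  obtain G T where G: "finite G" "G \<subseteq> A" and T: "T \<subseteq> alg_gen K G" "mult_closed T" "0 \<notin> T"
    and Aeq: "A = {b / t | b t. b \<in> alg_gen K G \<and> t \<in> T}"
    using eft unfolding ess_finite_type_def by blast
  define B where "B = alg_gen K G"
  have qe: "q \<in> endK K L" using Suc.prems by (simp add: Dm_Suc)
  have qc: "\<And>a. a \<in> L \<Longrightarrow> comm L a q \<in> Dm K L n" using Suc.prems by (simp add: Dm_Suc)
  have "\<forall>g\<in>G. \<exists>s\<in>S. \<forall>y\<in>A. s * comm L g q y \<in> A"
    using Suc.IH qc G A_L by blast
  then obtain sG where sG: "sG \<in> S" "\<forall>g\<in>G. \<forall>y\<in>A. sG * comm L g q y \<in> A"
    using common_den[OF G(1), of "\<lambda>g. comm L g q"] by blast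
  have "q 1 \<in> L" using endK_range[OF L_ring qe] .
  then obtain x0 s0 where x0: "x0 \<in> A" "s0 \<in> S" "q 1 = x0 / s0" by (rule locE)
  define s where "s = s0 * sG"
  have sS: "s \<in> S" using x0 sG Smul s_def by blast
  have sq1: "s * q 1 \<in> A"
  proof -
    have "s * q 1 = sG * x0" using x0 S_nz s_def by simp
    then show ?thesis using sG x0 S_A subA by auto
  qed
  have commA: "comm L b q y = b * q y - q (b * y)" if "b \<in> A" "y \<in> A" for b y
  proof -
    have "b \<in> L" "y \<in> L" using that A_L by blast+
    then show ?thesis using comm_eq[OF L_ring qe, of b y] by simp
  qed
  define P where "P = {b \<in> A. \<forall>y\<in>A. s * comm L b q y \<in> A}"
  have qadd: "q (u + v) = q u + q v" if "u \<in> A" "v \<in> A" for u v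
    using endK_add[OF qe] that A_L by blast
  have q0: "q 0 = 0" using endK_0[OF L_ring qe] .
  have sA: "s \<in> A" using sS S_A by blast
  have Psub: "sub_ring P"
    unfolding sub_ring_def
  proof (intro conjI ballI)
    show "0 \<in> P" unfolding P_def using subA q0 commA by auto
    show "1 \<in> P" unfolding P_def using subA commA by auto
  next
    fix b1 b2 assume b1: "b1 \<in> P" and b2: "b2 \<in> P"
    have b1A: "b1 \<in> A" and b2A: "b2 \<in> A" using b1 b2 P_def by auto
    show "b1 + b2 \<in> P" unfolding P_def
    proof (intro CollectI conjI ballI)
      show "b1 + b2 \<in> A" using b1A b2A subA by auto
      fix y assume y: "y \<in> A"
      have bs: "b1 + b2 \<in> A" "b1 * y \<in> A" "b2 * y \<in> A" using b1A b2A y subA by auto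
      have "comm L (b1 + b2) q y = (b1 + b2) * q y - q (b1 * y + b2 * y)"
        using commA[OF bs(1) y] by (simp add: distrib_right)
      also have "\<dots> = comm L b1 q y + comm L b2 q y"
        using commA[OF b1A y] commA[OF b2A y] qadd[OF bs(2,3)] by (simp add: algebra_simps)
      finally have "s * comm L (b1 + b2) q y = s * comm L b1 q y + s * comm L b2 q y"
        by (simp add: algebra_simps)
      then show "s * comm L (b1 + b2) q y \<in> A" using b1 b2 y subA unfolding P_def by auto
    qed
    show "b1 * b2 \<in> P" unfolding P_def
    proof (intro CollectI conjI ballI)
      show "b1 * b2 \<in> A" using b1A b2A subA by auto
      fix y assume y: "y \<in> A"
      have b2y: "b2 * y \<in> A" using b2A y subA by auto
      have bb: "b1 * b2 \<in> A" using b1A b2A subA by auto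
      have "comm L (b1 * b2) q y = b1 * b2 * q y - q (b1 * (b2 * y))"
        using commA[OF bb y] by (simp add: mult.assoc)
      also have "\<dots> = b1 * comm L b2 q y + comm L b1 q (b2 * y)"
        unfolding commA[OF b2A y] commA[OF b1A b2y] by (simp add: algebra_simps)
      finally have "comm L (b1 * b2) q y = b1 * comm L b2 q y + comm L b1 q (b2 * y)" .
      then have "s * comm L (b1 * b2) q y = b1 * (s * comm L b2 q y) + s * comm L b1 q (b2 * y)"
        by (simp add: algebra_simps)
      then show "s * comm L (b1 * b2) q y \<in> A" using b1 b2 y b2y b1A subA unfolding P_def by auto
    qed
  next
    fix b assume b: "b \<in> P"
    have bA: "b \<in> A" using b P_def by auto
    show "- b \<in> P" unfolding P_def
    proof (intro CollectI conjI ballI)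
      show "- b \<in> A" using bA subA by auto
      fix y assume y: "y \<in> A"
      have "q (- b * y) = - q (b * y)" using endK_neg[OF L_ring qe, of "b * y"] bA y subA A_L by auto
      moreover have nb: "- b \<in> A" using bA subA by auto
      ultimately have "comm L (- b) q y = - comm L b q y"
        unfolding commA[OF nb y] commA[OF bA y] by simp
      then have "s * comm L (- b) q y = - (s * comm L b q y)" by simp
      then show "s * comm L (- b) q y \<in> A" using b y subA unfolding P_def by auto
    qed
  qed
  have KGP: "K \<union> G \<subseteq> P"
  proof
    fix b assume "b \<in> K \<union> G"
    then show "b \<in> P"
    proof
      assume k: "b \<in> K"
      have "comm L b q y = 0" if y: "y \<in> A" for y
      proof -
        have "b \<in> A" "y \<in> L" using k KA y A_L by blast+
        then show ?thesis using commA[OF _ y] endK_K[OF qe k, of y] by simp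
      qed
      then show "b \<in> P" unfolding P_def using k KA subA by auto
    next
      assume g: "b \<in> G"
      have "s * comm L b q y \<in> A" if y: "y \<in> A" for y
      proof -
        have "s0 * (sG * comm L b q y) \<in> A" using sG(2) g y x0 S_A subA by auto
        then show ?thesis using s_def by (simp add: mult.assoc)
      qed
      then show "b \<in> P" unfolding P_def using g G by auto
    qed
  qed
  have BP: "B \<subseteq> P" unfolding B_def alg_gen_def using Psub KGP by blast
  have T1: "1 \<in> T" using T(2) by (simp add: mult_closed_def)
  have B1: "1 \<in> B" unfolding B_def alg_gen_def sub_ring_def by blast
  have BA: "B \<subseteq> A" using BP P_def by auto
  have "\<forall>y\<in>A. s * q y \<in> A"
  proof
    fix y assume "y \<in> A"
    then obtain b t where bt: "b \<in> B" "t \<in> T" "y = b / t" using Aeq B_def by blast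
    have tB: "t \<in> B" using bt T B_def by blast
    have tnz: "t \<noteq> 0" using bt T by auto
    have it: "1 / t \<in> A" using Aeq B1 bt B_def by blast
    have bA: "b \<in> A" and tA: "t \<in> A" using bt tB BA by auto
    have qb: "q b = b * q 1 - comm L b q 1" using commA[OF bA] subA by simp
    have sqb: "s * q b \<in> A"
    proof -
      have "s * q b = b * (s * q 1) - s * comm L b q 1" unfolding qb by (simp add: algebra_simps)
      then show ?thesis using sq1 bA BP bt subA P_def by auto
    qed
    have "comm L t q y = t * q y - q b" using commA[OF tA \<open>y \<in> A\<close>] bt tnz by simp
    then have tq: "t * q y = q b + comm L t q y" by simp
    have "q y = (1 / t) * (t * q y)" using tnz by simp
    also have "\<dots> = (1 / t) * (q b + comm L t q y)" using tq by simp
    finally have "s * q y = (1 / t) * (s * q b + s * comm L t q y)" by (simp add: algebra_simps)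
    moreover have "s * comm L t q y \<in> A" using tB BP \<open>y \<in> A\<close> P_def by auto
    then have "(1 / t) * (s * q b + s * comm L t q y) \<in> A" by (intro srmul[OF subA it] sradd[OF subA sqb])
    ultimately show "s * q y \<in> A" by (simp only:)
  qed
  then show ?case using sS by blast
qed

end


context setting begin

abbreviation "phi \<equiv> ext_op K A L"

lemma phi_prop: assumes d: "d \<in> Diff K A" shows "phi d \<in> Diff K L \<and> (\<forall>y\<in>A. phi d y = d y)"
proof -
  obtain i where "d \<in> Dm K A i" using d Diff_Dm[OF subA] by auto
  then obtain e where e: "e \<in> Dm K L i" "\<forall>y\<in>A. e y = d y" using ext_exists by blast
  have eD: "e \<in> Diff K L" using e Diff_Dm[OF L_ring] by blast
  have "\<exists>!e. e \<in> Diff K L \<and> (\<forall>y\<in>A. e y = d y)"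
  proof (rule ex1I[of _ e])
    show "e \<in> Diff K L \<and> (\<forall>y\<in>A. e y = d y)" using eD e by blast
    fix e' assume "e' \<in> Diff K L \<and> (\<forall>y\<in>A. e' y = d y)"
    then show "e' = e" using L_unique[of e' e] eD e by auto
  qed
  then show ?thesis unfolding ext_op_def by (rule theI')
qed

lemma phi_Diff: "d \<in> Diff K A \<Longrightarrow> phi d \<in> Diff K L" using phi_prop by blast
lemma phi_agree: "d \<in> Diff K A \<Longrightarrow> y \<in> A \<Longrightarrow> phi d y = d y" using phi_prop by blast

lemma phi_eq: "d \<in> Diff K A \<Longrightarrow> e \<in> Diff K L \<Longrightarrow> \<forall>y\<in>A. e y = d y \<Longrightarrow> phi d = e"
  using L_unique[of "phi d" e] phi_prop by auto

lemma phi_inj: assumes "d1 \<in> Diff K A" "d2 \<in> Diff K A" "phi d1 = phi d2" shows "d1 = d2"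
proof (rule ext)
  fix x show "d1 x = d2 x"
  proof (cases "x \<in> A")
    case True then show ?thesis using assms phi_agree by metis
  next
    case False then show ?thesis using assms Diff_endK[OF subA] endK_out by metis
  qed
qed

lemma phi_add: "d1 \<in> Diff K A \<Longrightarrow> d2 \<in> Diff K A \<Longrightarrow> phi (fadd d1 d2) = fadd (phi d1) (phi d2)"
proof (rule phi_eq)
  assume "d1 \<in> Diff K A" "d2 \<in> Diff K A"
  then show "fadd d1 d2 \<in> Diff K A" "fadd (phi d1) (phi d2) \<in> Diff K L"
    "\<forall>y\<in>A. fadd (phi d1) (phi d2) y = fadd d1 d2 y"
    using fadd_Diff[OF subA] fadd_Diff[OF L_ring] phi_Diff phi_agree by (auto simp: fadd_def)
qed

lemma phi_neg: "d1 \<in> Diff K A \<Longrightarrow> phi (fneg d1) = fneg (phi d1)"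
proof (rule phi_eq)
  assume "d1 \<in> Diff K A"
  then show "fneg d1 \<in> Diff K A" "fneg (phi d1) \<in> Diff K L"
    "\<forall>y\<in>A. fneg (phi d1) y = fneg d1 y"
    using fneg_Diff[OF subA] fneg_Diff[OF L_ring] phi_Diff phi_agree by (auto simp: fneg_def)
qed

lemma phi_comp: assumes d1: "d1 \<in> Diff K A" and d2: "d2 \<in> Diff K A"
  shows "phi (d1 \<circ> d2) = phi d1 \<circ> phi d2"
proof (rule phi_eq)
  show "d1 \<circ> d2 \<in> Diff K A" using comp_Diff[OF subA d1 d2] .
  show "phi d1 \<circ> phi d2 \<in> Diff K L" using comp_Diff[OF L_ring phi_Diff[OF d1] phi_Diff[OF d2]] .
  show "\<forall>y\<in>A. (phi d1 \<circ> phi d2) y = (d1 \<circ> d2) y"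
  proof
    fix y assume y: "y \<in> A"
    have "d2 y \<in> A" using Diff_endK[OF subA d2] endK_in y by blast
    then show "(phi d1 \<circ> phi d2) y = (d1 \<circ> d2) y" using phi_agree d1 d2 y by simp
  qed
qed

lemma phi_mulop: "a \<in> A \<Longrightarrow> phi (mulop A a) = mulop L a"
proof (rule phi_eq)
  assume a: "a \<in> A"
  show "mulop A a \<in> Diff K A" using mulop_Diff[OF subA KA a] .
  show "mulop L a \<in> Diff K L" using mulop_Diff[OF L_ring K_L] a A_L by blast
  show "\<forall>y\<in>A. mulop L a y = mulop A a y" using A_L a by auto
qed

lemma phi_fzero: "phi fzero = fzero"
proof (rule phi_eq)
  show "fzero \<in> Diff K A" "fzero \<in> Diff K L" "\<forall>y\<in>A. fzero y = fzero y"
    using fzero_Diff[OF subA] fzero_Diff[OF L_ring] by auto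
qed

lemma Diff_subalg: "subalg_containing (Diff K A) K A"
  unfolding subalg_containing_def
  using mulop_Diff[OF subA KA] fadd_Diff[OF subA] comp_Diff[OF subA] fneg_Diff[OF subA] by blast

lemma res_Dm:
  "q \<in> Dm K L n \<Longrightarrow> (\<forall>y\<in>A. q y \<in> A) \<Longrightarrow> (\<lambda>x. if x \<in> A then q x else 0) \<in> Dm K A n"
proof (induction n arbitrary: q)
  case 0 then show ?case by (simp add: fzero_def fun_eq_iff)
next
  case (Suc n)
  let ?r = "\<lambda>x. if x \<in> A then q x else 0"
  have qe: "q \<in> endK K L" using Suc.prems by (simp add: Dm_Suc)
  have re: "?r \<in> endK K A"
    unfolding endK_def
  proof (intro CollectI conjI allI ballI impI)
    fix x y k
    show "x \<notin> A \<Longrightarrow> ?r x = 0" by simp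
    show "x \<in> A \<Longrightarrow> ?r x \<in> A" using Suc.prems by simp
    show "x \<in> A \<Longrightarrow> y \<in> A \<Longrightarrow> ?r (x + y) = ?r x + ?r y"
      using endK_add[OF qe] A_L subA by auto
    show "k \<in> K \<Longrightarrow> x \<in> A \<Longrightarrow> ?r (k * x) = k * ?r x"
      using endK_K[OF qe] A_L subA KA by auto
  qed
  have "comm A a ?r \<in> Dm K A n" if a: "a \<in> A" for a
  proof -
    have aL: "a \<in> L" using a A_L by blast
    have cq: "comm L a q \<in> Dm K L n" using Suc.prems aL by (simp add: Dm_Suc)
    have cA: "\<forall>y\<in>A. comm L a q y \<in> A"
    proof
      fix y assume y: "y \<in> A"
      have "comm L a q y = a * q y - q (a * y)" using comm_eq[OF L_ring qe aL, of y] y A_L by auto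
      then show "comm L a q y \<in> A" using Suc.prems a y subA by auto
    qed
    have "comm A a ?r = (\<lambda>x. if x \<in> A then comm L a q x else 0)"
    proof (rule ext)
      fix x show "comm A a ?r x = (if x \<in> A then comm L a q x else 0)"
        using comm_eq[OF subA re a, of x] comm_eq[OF L_ring qe aL, of x] A_L a subA by auto
    qed
    then show ?thesis using Suc.IH[OF cq cA] by simp
  qed
  then show ?case using re by (simp add: Dm_Suc)
qed

lemma left_frac_Diff:
  assumes eft: "ess_finite_type K A" and q: "q \<in> Diff K L"
  shows "\<exists>s\<in>S. \<exists>r\<in>Diff K A. mulop L s \<circ> q = phi r"
proof -
  obtain n where qn: "q \<in> Dm K L n" using q Diff_Dm[OF L_ring] by auto
  obtain s where s: "s \<in> S" "\<forall>y\<in>A. s * q y \<in> A" using ft[OF eft qn] by blast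
  have sL: "s \<in> L" using s S_A A_L by blast
  let ?q = "mulop L s \<circ> q"
  have q'n: "?q \<in> Dm K L n" using mulop_comp_Dm[OF L_ring K_L sL qn] .
  have q'A: "\<forall>y\<in>A. ?q y \<in> A" using s endK_range[OF L_ring Dm_endK[OF L_ring qn]] by simp
  define r where "r = (\<lambda>x. if x \<in> A then ?q x else 0)"
  have rD: "r \<in> Diff K A" unfolding r_def using res_Dm[OF q'n q'A] Diff_Dm[OF subA] by blast
  have "phi r = ?q"
    by (rule phi_eq[OF rD]) (use q'n Diff_Dm[OF L_ring] in \<open>auto simp: r_def\<close>)
  then show ?thesis using s rD by metis
qed

end


lemma one_comp: "sub_ring C \<Longrightarrow> u \<in> endK K C \<Longrightarrow> mulop C 1 \<circ> u = u \<and> u \<circ> mulop C 1 = u"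
  by (auto simp: fun_eq_iff endK_range mulop_def endK_out endK_0)

lemma mulop_cancel:
  assumes C: "sub_ring C" and s: "s \<noteq> 0" and f: "f \<in> endK K C" and g: "g \<in> endK K C"
    and eq: "mulop C s \<circ> f = mulop C s \<circ> g"
  shows "f = g"
proof (rule ext)
  fix x
  have "s * f x = s * g x" using fun_cong[OF eq, of x] endK_range[OF C f, of x] endK_range[OF C g, of x] by simp
  then show "f x = g x" using s by simp
qed

context setting begin

abbreviation "MS \<equiv> mulop A ` S"
abbreviation "FI R \<equiv> frac_image (Diff K L) phi R MS"

lemma R_Diff: "subalg_containing R K A \<Longrightarrow> R \<subseteq> Diff K A" by (simp add: subalg_containing_def)
lemma MS_R: "subalg_containing R K A \<Longrightarrow> MS \<subseteq> R" using S_A by (auto simp: subalg_containing_def)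

lemma R_Dm: "subalg_containing R K A \<Longrightarrow> r \<in> R \<Longrightarrow> \<exists>n. r \<in> Dm K A n"
  using R_Diff Diff_Dm[OF subA] by blast

lemma regular_R: assumes R: "subalg_containing R K A" and s: "s \<in> S" shows "regular_in R (mulop A s)"
  unfolding regular_in_def
proof (intro conjI ballI impI)
  fix r assume r: "r \<in> R"
  then have re: "r \<in> endK K A" using R_Diff[OF R] Diff_endK[OF subA] by blast
  show "mulop A s \<circ> r = fzero \<Longrightarrow> r = fzero" using regular_left[OF subA S_nz[OF s] re] .
  obtain n where rn: "r \<in> Dm K A n" using R_Dm[OF R r] by blast
  show "r \<circ> mulop A s = fzero \<Longrightarrow> r = fzero" using regular_right[OF subA S_A[OF s] S_nz[OF s] rn] .
qed

lemma mulop_fzero: "mulop C a \<circ> fzero = fzero" by (simp add: fun_eq_iff mulop_def fzero_def)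

lemma left_den: assumes R: "subalg_containing R K A" shows "left_denominator_set R MS"
  unfolding left_denominator_set_def
proof (intro conjI ballI impI)
  show "MS \<subseteq> R" using MS_R[OF R] .
next
  fix s r assume s: "s \<in> MS" and r: "r \<in> R"
  obtain s0 where s0: "s0 \<in> S" "s = mulop A s0" using s by blast
  obtain n where rn: "r \<in> Dm K A n" using R_Dm[OF R r] by blast
  obtain r' where r': "r' \<in> R" "mulop A (s0 ^ n) \<circ> r = r' \<circ> mulop A s0"
    using ore_left[OF subA KA R S_A[OF s0(1)] r rn] by blast
  have "mulop A (s0 ^ n) \<in> MS" using pow_in[OF mcS s0(1)] by blast
  then show "\<exists>s'\<in>MS. \<exists>r'\<in>R. s' \<circ> r = r' \<circ> s" using r' s0 by blast
next
  fix s r assume s: "s \<in> MS" and r: "r \<in> R" and z: "r \<circ> s = fzero"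
  obtain s0 where s0: "s0 \<in> S" "s = mulop A s0" using s by blast
  have "r = fzero" using regular_R[OF R s0(1)] r z s0 by (simp add: regular_in_def)
  then show "\<exists>s'\<in>MS. s' \<circ> r = fzero" using s by (auto simp: mulop_fzero)
qed

lemma right_den: assumes R: "subalg_containing R K A" shows "right_denominator_set R MS"
  unfolding right_denominator_set_def
proof (intro conjI ballI impI)
  show "MS \<subseteq> R" using MS_R[OF R] .
next
  fix s r assume s: "s \<in> MS" and r: "r \<in> R"
  obtain s0 where s0: "s0 \<in> S" "s = mulop A s0" using s by blast
  obtain n where rn: "r \<in> Dm K A n" using R_Dm[OF R r] by blast
  obtain r' where r': "r' \<in> R" "r \<circ> mulop A (s0 ^ n) = mulop A s0 \<circ> r'"
    using ore_right[OF subA KA R S_A[OF s0(1)] r rn] by blast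
  have "mulop A (s0 ^ n) \<in> MS" using pow_in[OF mcS s0(1)] by blast
  then show "\<exists>s'\<in>MS. \<exists>r'\<in>R. r \<circ> s' = s \<circ> r'" using r' s0 by blast
next
  fix s r assume s: "s \<in> MS" and r: "r \<in> R" and z: "s \<circ> r = fzero"
  obtain s0 where s0: "s0 \<in> S" "s = mulop A s0" using s by blast
  have "r = fzero" using regular_R[OF R s0(1)] r z s0 by (simp add: regular_in_def)
  then show "\<exists>s'\<in>MS. r \<circ> s' = fzero" using s by auto
qed

lemma frac_hom_gen:
  assumes R: "subalg_containing R K A" and Q: "op_ring Q (mulop L 1)" and img: "\<forall>r\<in>R. phi r \<in> Q"
  shows "frac_hom R (mulop A 1) Q (mulop L 1) phi"
  unfolding frac_hom_def
proof (intro conjI ballI)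
  show "phi (mulop A 1) = mulop L 1" using phi_mulop sr1[OF subA] by blast
  fix r r' assume "r \<in> R" "r' \<in> R"
  then have "r \<in> Diff K A" "r' \<in> Diff K A" using R_Diff[OF R] by auto
  then show "phi (fadd r r') = fadd (phi r) (phi r')" "phi (r \<circ> r') = phi r \<circ> phi r'"
    using phi_add phi_comp by auto
qed (use Q img in auto)

lemma inv_gen: "s \<in> MS \<Longrightarrow> mulop L (1 / s0) \<circ> phi s = mulop L 1 \<and> phi s \<circ> mulop L (1 / s0) = mulop L 1
  \<Longrightarrow> True" by simp

lemma inv_ex: assumes Q: "\<And>s0. s0 \<in> S \<Longrightarrow> mulop L (1 / s0) \<in> Q"
  shows "\<forall>s\<in>MS. \<exists>t\<in>Q. t \<circ> phi s = mulop L 1 \<and> phi s \<circ> t = mulop L 1"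
proof
  fix s assume "s \<in> MS"
  then obtain s0 where s0: "s0 \<in> S" "s = mulop A s0" by blast
  have ps: "phi s = mulop L s0" using phi_mulop S_A s0 by blast
  have nz: "s0 \<noteq> 0" using S_nz s0 by blast
  have sL: "s0 \<in> L" using S_A A_L s0 by blast
  have "mulop L (1 / s0) \<circ> mulop L s0 = mulop L 1"
    using mulop_mult[OF L_ring sL, of "1 / s0"] nz by simp
  moreover have "mulop L s0 \<circ> mulop L (1 / s0) = mulop L 1"
    using mulop_mult[OF L_ring inv_L[OF s0(1)], of s0] nz by simp
  moreover have "mulop L (1 / s0) \<in> Q" using Q s0(1) by blast
  ultimately show "\<exists>t\<in>Q. t \<circ> phi s = mulop L 1 \<and> phi s \<circ> t = mulop L 1"
    unfolding ps by blast
qed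

lemma zero_iff: assumes R: "subalg_containing R K A" and r: "r \<in> R"
  shows "(phi r = fzero \<longleftrightarrow> (\<exists>s\<in>MS. s \<circ> r = fzero)) \<and> (phi r = fzero \<longleftrightarrow> (\<exists>s\<in>MS. r \<circ> s = fzero))"
proof -
  have rD: "r \<in> Diff K A" using R_Diff[OF R] r by blast
  have a: "phi r = fzero \<longleftrightarrow> r = fzero"
    using phi_inj[OF rD fzero_Diff[OF subA]] phi_fzero by auto
  have b: "(\<exists>s\<in>MS. s \<circ> r = fzero) \<longleftrightarrow> r = fzero"
  proof
    assume "\<exists>s\<in>MS. s \<circ> r = fzero"
    then obtain s0 where "s0 \<in> S" "mulop A s0 \<circ> r = fzero" by blast
    then show "r = fzero" using regular_R[OF R] r by (simp add: regular_in_def)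
  next
    assume "r = fzero" then show "\<exists>s\<in>MS. s \<circ> r = fzero" using S1 by (auto simp: mulop_fzero)
  qed
  have c: "(\<exists>s\<in>MS. r \<circ> s = fzero) \<longleftrightarrow> r = fzero"
  proof
    assume "\<exists>s\<in>MS. r \<circ> s = fzero"
    then obtain s0 where "s0 \<in> S" "r \<circ> mulop A s0 = fzero" by blast
    then show "r = fzero" using regular_R[OF R] r by (simp add: regular_in_def)
  next
    assume "r = fzero" then show "\<exists>s\<in>MS. r \<circ> s = fzero" using S1 by auto
  qed
  show ?thesis using a b c by blast
qed

lemma right_frac_gen:
  assumes R: "subalg_containing R K A" and q: "q \<in> Diff K L" and s: "s \<in> S" and r: "r \<in> R"
    and eq: "mulop L s \<circ> q = phi r"
  shows "\<exists>s'\<in>S. \<exists>r'\<in>R. q \<circ> mulop L s' = phi r'"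
proof -
  obtain n where rn: "r \<in> Dm K A n" using R_Dm[OF R r] by blast
  have sA: "s \<in> A" using S_A s by blast
  obtain r' where r': "r' \<in> R" "r \<circ> mulop A (s ^ n) = mulop A s \<circ> r'"
    using ore_right[OF subA KA R sA r rn] by blast
  have snA: "s ^ n \<in> A" using pow_in[OF mcS s] S_A by blast
  have rD: "r \<in> Diff K A" "r' \<in> Diff K A" using R_Diff[OF R] r r'(1) by auto
  have "mulop L s \<circ> (q \<circ> mulop L (s ^ n)) = phi r \<circ> mulop L (s ^ n)"
    using eq by (simp add: o_assoc)
  also have "\<dots> = phi (r \<circ> mulop A (s ^ n))"
    using phi_comp[OF rD(1) mulop_Diff[OF subA KA snA]] phi_mulop[OF snA] by simp
  also have "\<dots> = phi (mulop A s) \<circ> phi r'"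
    using r'(2) phi_comp[OF mulop_Diff[OF subA KA sA] rD(2)] by simp
  also have "\<dots> = mulop L s \<circ> phi r'" using phi_mulop[OF sA] by simp
  finally have eq2: "mulop L s \<circ> (q \<circ> mulop L (s ^ n)) = mulop L s \<circ> phi r'" .
  have h1: "q \<circ> mulop L (s ^ n) \<in> endK K L"
    using comp_endK[OF L_ring Diff_endK[OF L_ring q] mulop_endK[OF L_ring K_L]] snA A_L by blast
  have h2: "phi r' \<in> endK K L" using Diff_endK[OF L_ring phi_Diff[OF rD(2)]] .
  have "q \<circ> mulop L (s ^ n) = phi r'" by (rule mulop_cancel[OF L_ring S_nz[OF s] h1 h2 eq2])
  then show ?thesis using pow_in[OF mcS s] r' by blast
qed

end


context setting begin

lemma FI_mem: "q \<in> FI R \<longleftrightarrow> q \<in> Diff K L \<and> (\<exists>s0\<in>S. \<exists>r\<in>R. mulop L s0 \<circ> q = phi r)"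
proof -
  have "phi (mulop A s0) = mulop L s0" if "s0 \<in> S" for s0 using phi_mulop S_A that by blast
  then show ?thesis unfolding frac_image_def by force
qed

lemma FI_ring: assumes R: "subalg_containing R K A" shows "op_ring (FI R) (mulop L 1)"
  unfolding op_ring_def
proof (intro conjI ballI)
  have one: "phi (mulop A 1) = mulop L 1" using phi_mulop sr1[OF subA] by blast
  have oneL: "mulop L 1 \<in> Diff K L" using mulop_Diff[OF L_ring K_L] sr1[OF L_ring] by blast
  have oo: "mulop L 1 \<circ> mulop L 1 = mulop L 1"
    using one_comp[OF L_ring Diff_endK[OF L_ring oneL]] by blast
  show "mulop L 1 \<in> FI R" unfolding FI_mem
    using oneL S1 one oo subalg_basic(2)[OF R, of 1] sr1[OF subA] by metis
  show "fzero \<in> FI R" unfolding FI_mem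
    using fzero_Diff[OF L_ring] S1 phi_fzero fzero_R[OF subA R] mulop_fzero by metis
next
  fix u v assume u: "u \<in> FI R" and v: "v \<in> FI R"
  obtain s1 r1 where uD: "u \<in> Diff K L" and s1: "s1 \<in> S" "r1 \<in> R" "mulop L s1 \<circ> u = phi r1"
    using u FI_mem by blast
  obtain s2 r2 where vD: "v \<in> Diff K L" and s2: "s2 \<in> S" "r2 \<in> R" "mulop L s2 \<circ> v = phi r2"
    using v FI_mem by blast
  have sA: "s1 \<in> A" "s2 \<in> A" using s1 s2 S_A by auto
  have sL: "s1 \<in> L" "s2 \<in> L" using sA A_L by auto
  have rD: "r1 \<in> Diff K A" "r2 \<in> Diff K A" using R_Diff[OF R] s1 s2 by auto
  have ue: "u \<in> endK K L" and ve: "v \<in> endK K L" using uD vD Diff_endK[OF L_ring] by auto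
  have p1e: "phi r1 \<in> endK K L" and p2e: "phi r2 \<in> endK K L"
    using phi_Diff rD Diff_endK[OF L_ring] by auto
  define r where "r = fadd (mulop A s2 \<circ> r1) (mulop A s1 \<circ> r2)"
  have rR: "r \<in> R" unfolding r_def using subalg_basic[OF R] sA s1 s2 by auto
  have "phi r = fadd (mulop L s2 \<circ> phi r1) (mulop L s1 \<circ> phi r2)"
    unfolding r_def
    using phi_add comp_Diff[OF subA] mulop_Diff[OF subA KA] phi_comp phi_mulop sA rD by metis
  moreover have "mulop L (s1 * s2) \<circ> fadd u v = fadd (mulop L s2 \<circ> phi r1) (mulop L s1 \<circ> phi r2)"
  proof (rule ext)
    fix x
    have "phi r1 x = s1 * u x" "phi r2 x = s2 * v x"
      using fun_cong[OF s1(3), of x] fun_cong[OF s2(3), of x] endK_range[OF L_ring ue] endK_range[OF L_ring ve]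
      by auto
    then show "(mulop L (s1 * s2) \<circ> fadd u v) x = fadd (mulop L s2 \<circ> phi r1) (mulop L s1 \<circ> phi r2) x"
      using endK_range[OF L_ring ue, of x] endK_range[OF L_ring ve, of x] endK_range[OF L_ring p1e, of x]
        endK_range[OF L_ring p2e, of x] L_ring
      by (simp add: fadd_def algebra_simps)
  qed
  ultimately show "fadd u v \<in> FI R" unfolding FI_mem
    using fadd_Diff[OF L_ring uD vD] Smul[OF s1(1) s2(1)] rR by metis
  obtain n where rn: "r1 \<in> Dm K A n" using R_Dm[OF R s1(2)] by blast
  obtain r' where r': "r' \<in> R" "mulop A (s2 ^ n) \<circ> r1 = r' \<circ> mulop A s2"
    using ore_left[OF subA KA R sA(2) s1(2) rn] by blast
  have r'D: "r' \<in> Diff K A" using R_Diff[OF R] r' by auto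
  have snA: "s2 ^ n \<in> A" using pow_in[OF mcS s2(1)] S_A by blast
  have snL: "s2 ^ n \<in> L" using snA A_L by blast
  have "mulop L (s2 ^ n * s1) \<circ> (u \<circ> v) = mulop L (s2 ^ n) \<circ> (mulop L s1 \<circ> u) \<circ> v"
    using mulop_mult[OF L_ring sL(1), of "s2 ^ n"] by (simp add: o_assoc)
  also have "\<dots> = phi (mulop A (s2 ^ n) \<circ> r1) \<circ> v"
    using s1(3) phi_comp[OF mulop_Diff[OF subA KA snA] rD(1)] phi_mulop[OF snA] by simp
  also have "\<dots> = phi r' \<circ> (mulop L s2 \<circ> v)"
    using r'(2) phi_comp[OF r'D mulop_Diff[OF subA KA sA(2)]] phi_mulop[OF sA(2)] by (simp add: o_assoc)
  also have "\<dots> = phi (r' \<circ> r2)" using s2(3) phi_comp[OF r'D rD(2)] by simp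
  finally have "mulop L (s2 ^ n * s1) \<circ> (u \<circ> v) = phi (r' \<circ> r2)" .
  moreover have "r' \<circ> r2 \<in> R" using subalg_basic(4)[OF R r'(1) s2(2)] .
  moreover have "s2 ^ n * s1 \<in> S" using Smul pow_in[OF mcS s2(1)] s1(1) by blast
  ultimately show "u \<circ> v \<in> FI R" unfolding FI_mem
    using comp_Diff[OF L_ring uD vD] by metis
next
  fix u assume u: "u \<in> FI R"
  obtain s1 r1 where uD: "u \<in> Diff K L" and s1: "s1 \<in> S" "r1 \<in> R" "mulop L s1 \<circ> u = phi r1"
    using u FI_mem by blast
  have rD: "r1 \<in> Diff K A" using R_Diff[OF R] s1 by auto
  have ue: "u \<in> endK K L" using uD Diff_endK[OF L_ring] by auto
  have "mulop L s1 \<circ> fneg u = fneg (mulop L s1 \<circ> u)"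
  proof (rule ext)
    fix x have "u x \<in> L" "- u x \<in> L" using endK_range[OF L_ring ue] srneg[OF L_ring] by auto
    then show "(mulop L s1 \<circ> fneg u) x = fneg (mulop L s1 \<circ> u) x" by (simp add: fneg_def)
  qed
  then have "mulop L s1 \<circ> fneg u = phi (fneg r1)" using s1(3) phi_neg[OF rD] by simp
  then show "fneg u \<in> FI R" unfolding FI_mem
    using fneg_Diff[OF L_ring uD] s1 subalg_basic(5)[OF R] by metis
  have "mulop L 1 \<circ> u = u \<and> u \<circ> mulop L 1 = u" using one_comp[OF L_ring ue] .
  then show "mulop L 1 \<circ> u = u" "u \<circ> mulop L 1 = u" by auto
qed

end


context setting begin

lemma Diff_ring: "op_ring (Diff K L) (mulop L 1)"
  unfolding op_ring_def
proof (intro conjI ballI)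
  show "mulop L 1 \<in> Diff K L" using mulop_Diff[OF L_ring K_L sr1[OF L_ring]] .
  show "fzero \<in> Diff K L" using fzero_Diff[OF L_ring] .
  fix u v assume u: "u \<in> Diff K L" and v: "v \<in> Diff K L"
  show "fadd u v \<in> Diff K L" using fadd_Diff[OF L_ring u v] .
  show "u \<circ> v \<in> Diff K L" using comp_Diff[OF L_ring u v] .
next
  fix u assume u: "u \<in> Diff K L"
  show "fneg u \<in> Diff K L" using fneg_Diff[OF L_ring u] .
  have "mulop L 1 \<circ> u = u \<and> u \<circ> mulop L 1 = u" using one_comp[OF L_ring Diff_endK[OF L_ring u]] .
  then show "mulop L 1 \<circ> u = u" "u \<circ> mulop L 1 = u" by auto
qed

lemma phi_FI: assumes R: "subalg_containing R K A" and r: "r \<in> R" shows "phi r \<in> FI R"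
proof -
  have rD: "r \<in> Diff K A" using R_Diff[OF R] r by blast
  have "mulop L 1 \<circ> phi r = phi r" using one_comp[OF L_ring Diff_endK[OF L_ring phi_Diff[OF rD]]] by blast
  then show ?thesis unfolding FI_mem using phi_Diff[OF rD] S1 r by blast
qed

lemma inv_FI: assumes R: "subalg_containing R K A" and s: "s0 \<in> S" shows "mulop L (1 / s0) \<in> FI R"
proof -
  have iL: "1 / s0 \<in> L" using inv_L s by blast
  have sL: "s0 \<in> L" using S_A A_L s by blast
  have "mulop L s0 \<circ> mulop L (1 / s0) = mulop L 1"
    using mulop_mult[OF L_ring iL, of s0] S_nz[OF s] by simp
  also have "\<dots> = phi (mulop A 1)" using phi_mulop sr1[OF subA] by simp
  finally show ?thesis unfolding FI_mem
    using mulop_Diff[OF L_ring K_L iL] s subalg_basic(2)[OF R] sr1[OF subA] by blast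
qed

lemma left_frac_R: assumes R: "subalg_containing R K A"
  shows "left_ring_of_fractions R (mulop A 1) MS (FI R) (mulop L 1) phi"
  unfolding left_ring_of_fractions_def
proof (intro conjI)
  show "frac_hom R (mulop A 1) (FI R) (mulop L 1) phi"
    using frac_hom_gen[OF R FI_ring[OF R]] phi_FI[OF R] by blast
  show "\<forall>s\<in>MS. \<exists>t\<in>FI R. t \<circ> phi s = mulop L 1 \<and> phi s \<circ> t = mulop L 1"
    by (rule inv_ex) (rule inv_FI[OF R])
  show "\<forall>q\<in>FI R. \<exists>s\<in>MS. \<exists>r\<in>R. phi s \<circ> q = phi r" unfolding frac_image_def by blast
  show "\<forall>r\<in>R. (phi r = fzero) = (\<exists>s\<in>MS. s \<circ> r = fzero)"
  proof
    fix r assume r: "r \<in> R"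
    show "(phi r = fzero) = (\<exists>s\<in>MS. s \<circ> r = fzero)" using zero_iff[OF R r] by (rule conjunct1)
  qed
qed

lemma right_frac_R: assumes R: "subalg_containing R K A"
  shows "right_ring_of_fractions R (mulop A 1) MS (FI R) (mulop L 1) phi"
  unfolding right_ring_of_fractions_def
proof (intro conjI)
  show "frac_hom R (mulop A 1) (FI R) (mulop L 1) phi"
    using frac_hom_gen[OF R FI_ring[OF R]] phi_FI[OF R] by blast
  show "\<forall>s\<in>MS. \<exists>t\<in>FI R. t \<circ> phi s = mulop L 1 \<and> phi s \<circ> t = mulop L 1"
    by (rule inv_ex) (rule inv_FI[OF R])
  show "\<forall>q\<in>FI R. \<exists>s\<in>MS. \<exists>r\<in>R. q \<circ> phi s = phi r"
  proof
    fix q assume "q \<in> FI R"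
    then obtain s0 r where q: "q \<in> Diff K L" "s0 \<in> S" "r \<in> R" "mulop L s0 \<circ> q = phi r"
      using FI_mem by blast
    obtain s' r' where sr: "s' \<in> S" "r' \<in> R" "q \<circ> mulop L s' = phi r'"
      using right_frac_gen[OF R q] by blast
    have "phi (mulop A s') = mulop L s'" using phi_mulop S_A sr(1) by blast
    moreover have "mulop A s' \<in> MS" using sr(1) by blast
    ultimately show "\<exists>s\<in>MS. \<exists>r\<in>R. q \<circ> phi s = phi r" using sr by metis
  qed
  show "\<forall>r\<in>R. (phi r = fzero) = (\<exists>s\<in>MS. r \<circ> s = fzero)"
  proof
    fix r assume r: "r \<in> R"
    show "(phi r = fzero) = (\<exists>s\<in>MS. r \<circ> s = fzero)" using zero_iff[OF R r] by (rule conjunct2)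
  qed
qed

lemma left_frac_D: assumes eft: "ess_finite_type K A"
  shows "left_ring_of_fractions (Diff K A) (mulop A 1) MS (Diff K L) (mulop L 1) phi"
  unfolding left_ring_of_fractions_def
proof (intro conjI)
  show "frac_hom (Diff K A) (mulop A 1) (Diff K L) (mulop L 1) phi"
    using frac_hom_gen[OF Diff_subalg Diff_ring] phi_Diff by blast
  show "\<forall>s\<in>MS. \<exists>t\<in>Diff K L. t \<circ> phi s = mulop L 1 \<and> phi s \<circ> t = mulop L 1"
    by (rule inv_ex) (use mulop_Diff[OF L_ring K_L] inv_L in blast)
  show "\<forall>q\<in>Diff K L. \<exists>s\<in>MS. \<exists>r\<in>Diff K A. phi s \<circ> q = phi r"
  proof
    fix q assume q: "q \<in> Diff K L"
    obtain s r where sr: "s \<in> S" "r \<in> Diff K A" "mulop L s \<circ> q = phi r"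
      using left_frac_Diff[OF eft q] by blast
    have "phi (mulop A s) = mulop L s" using phi_mulop S_A sr(1) by blast
    moreover have "mulop A s \<in> MS" using sr(1) by blast
    ultimately show "\<exists>s\<in>MS. \<exists>r\<in>Diff K A. phi s \<circ> q = phi r" using sr by metis
  qed
  show "\<forall>r\<in>Diff K A. (phi r = fzero) = (\<exists>s\<in>MS. s \<circ> r = fzero)"
  proof
    fix r assume r: "r \<in> Diff K A"
    show "(phi r = fzero) = (\<exists>s\<in>MS. s \<circ> r = fzero)" using zero_iff[OF Diff_subalg r] by (rule conjunct1)
  qed
qed

lemma right_frac_D: assumes eft: "ess_finite_type K A"
  shows "right_ring_of_fractions (Diff K A) (mulop A 1) MS (Diff K L) (mulop L 1) phi"
  unfolding right_ring_of_fractions_def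
proof (intro conjI)
  show "frac_hom (Diff K A) (mulop A 1) (Diff K L) (mulop L 1) phi"
    using frac_hom_gen[OF Diff_subalg Diff_ring] phi_Diff by blast
  show "\<forall>s\<in>MS. \<exists>t\<in>Diff K L. t \<circ> phi s = mulop L 1 \<and> phi s \<circ> t = mulop L 1"
    by (rule inv_ex) (use mulop_Diff[OF L_ring K_L] inv_L in blast)
  show "\<forall>q\<in>Diff K L. \<exists>s\<in>MS. \<exists>r\<in>Diff K A. q \<circ> phi s = phi r"
  proof
    fix q assume q: "q \<in> Diff K L"
    obtain s r where sr: "s \<in> S" "r \<in> Diff K A" "mulop L s \<circ> q = phi r"
      using left_frac_Diff[OF eft q] by blast
    obtain s' r' where sr': "s' \<in> S" "r' \<in> Diff K A" "q \<circ> mulop L s' = phi r'"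
      using right_frac_gen[OF Diff_subalg q sr] by blast
    have "phi (mulop A s') = mulop L s'" using phi_mulop S_A sr'(1) by blast
    moreover have "mulop A s' \<in> MS" using sr'(1) by blast
    ultimately show "\<exists>s\<in>MS. \<exists>r\<in>Diff K A. q \<circ> phi s = phi r" using sr' by metis
  qed
  show "\<forall>r\<in>Diff K A. (phi r = fzero) = (\<exists>s\<in>MS. r \<circ> s = fzero)"
  proof
    fix r assume r: "r \<in> Diff K A"
    show "(phi r = fzero) = (\<exists>s\<in>MS. r \<circ> s = fzero)" using zero_iff[OF Diff_subalg r] by (rule conjunct2)
  qed
qed

lemma mulL_FI: assumes R: "subalg_containing R K A" shows "mulop L ` L \<subseteq> FI R"
proof
  fix m assume "m \<in> mulop L ` L"
  then obtain c where c: "c \<in> L" "m = mulop L c" by blast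
  obtain x s where xs: "x \<in> A" "s \<in> S" "c = x / s" using c(1) by (rule locE)
  have "mulop L s \<circ> mulop L c = mulop L (s * c)" using mulop_mult[OF L_ring c(1), of s] by simp
  also have "s * c = x" using xs S_nz by simp
  also have "mulop L x = phi (mulop A x)" using phi_mulop xs by simp
  finally show "m \<in> FI R" unfolding FI_mem c(2)
    using mulop_Diff[OF L_ring K_L c(1)] xs subalg_basic(2)[OF R] by blast
qed

lemma essential:
  assumes R: "subalg_containing R K A" and eq: "FI R = Diff K L"
  shows "essential_left R (Diff K A) R \<and> essential_right R (Diff K A) R"
proof -
  have RD: "R \<subseteq> Diff K A" using R_Diff[OF R] .
  have z: "fzero \<in> R" using fzero_R[OF subA R] .
  have lsub: "left_submodule R (Diff K A) R" unfolding left_submodule_def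
    using RD z subalg_basic[OF R] by blast
  have rsub: "right_submodule R (Diff K A) R" unfolding right_submodule_def
    using RD z subalg_basic[OF R] by blast
  have L: "R \<inter> N' \<noteq> {fzero}" if N': "left_submodule R (Diff K A) N'" "N' \<noteq> {fzero}" for N'
  proof -
    have "fzero \<in> N'" using N' by (simp add: left_submodule_def)
    then obtain d where d: "d \<in> N'" "d \<noteq> fzero" using N'(2) by blast
    have dD: "d \<in> Diff K A" using d N' by (auto simp: left_submodule_def)
    have "phi d \<in> FI R" using eq phi_Diff[OF dD] by simp
    then obtain s0 r where sr: "s0 \<in> S" "r \<in> R" "mulop L s0 \<circ> phi d = phi r" using FI_mem by blast
    have s0A: "s0 \<in> A" using S_A sr by blast
    have msD: "mulop A s0 \<in> Diff K A" using mulop_Diff[OF subA KA s0A] .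
    have "phi (mulop A s0 \<circ> d) = phi r" using phi_comp[OF msD dD] phi_mulop[OF s0A] sr by simp
    then have eqr: "mulop A s0 \<circ> d = r" using phi_inj comp_Diff[OF subA msD dD] RD sr by blast
    have inN: "mulop A s0 \<circ> d \<in> N'" using N' d subalg_basic(2)[OF R s0A] by (auto simp: left_submodule_def)
    have "mulop A s0 \<circ> d \<noteq> fzero"
      using regular_left[OF subA S_nz[OF sr(1)] Diff_endK[OF subA dD]] d by blast
    then show ?thesis using eqr inN sr by blast
  qed
  have Rt: "R \<inter> N' \<noteq> {fzero}" if N': "right_submodule R (Diff K A) N'" "N' \<noteq> {fzero}" for N'
  proof -
    have "fzero \<in> N'" using N' by (simp add: right_submodule_def)
    then obtain d where d: "d \<in> N'" "d \<noteq> fzero" using N'(2) by blast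
    have dD: "d \<in> Diff K A" using d N' by (auto simp: right_submodule_def)
    have "phi d \<in> FI R" using eq phi_Diff[OF dD] by simp
    then obtain s0 r where sr: "s0 \<in> S" "r \<in> R" "mulop L s0 \<circ> phi d = phi r" using FI_mem by blast
    obtain s1 r1 where sr1: "s1 \<in> S" "r1 \<in> R" "phi d \<circ> mulop L s1 = phi r1"
      using right_frac_gen[OF R phi_Diff[OF dD] sr] by blast
    have s1A: "s1 \<in> A" using S_A sr1 by blast
    have msD: "mulop A s1 \<in> Diff K A" using mulop_Diff[OF subA KA s1A] .
    have "phi (d \<circ> mulop A s1) = phi r1" using phi_comp[OF dD msD] phi_mulop[OF s1A] sr1 by simp
    then have eqr: "d \<circ> mulop A s1 = r1" using phi_inj comp_Diff[OF subA dD msD] RD sr1 by blast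
    have inN: "d \<circ> mulop A s1 \<in> N'" using N' d subalg_basic(2)[OF R s1A] by (auto simp: right_submodule_def)
    obtain n where dn: "d \<in> Dm K A n" using dD Diff_Dm[OF subA] by blast
    have "d \<circ> mulop A s1 \<noteq> fzero"
      using regular_right[OF subA s1A S_nz[OF sr1(1)] dn] d by blast
    then show ?thesis using eqr inN sr1 by blast
  qed
  show ?thesis unfolding essential_left_def essential_right_def using lsub rsub L Rt by blast
qed

end

theorem lemma3p3:
  fixes K A S :: "'f::field set" and R :: "('f \<Rightarrow> 'f) set"
  assumes "sub_field K" and "K \<subseteq> A" and "sub_ring A"
    and "ess_finite_type K A"
    and "subalg_containing R K A"
    and "mult_closed S" and "S \<subseteq> A - {0}"
  shows "left_denominator_set R (mulop A ` S) \<and> right_denominator_set R (mulop A ` S)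
       \<and> (\<forall>s\<in>S. regular_in R (mulop A s))
     \<and> left_ring_of_fractions R (mulop A 1) (mulop A ` S)
          (frac_image (Diff K (loc S A)) (ext_op K A (loc S A)) R (mulop A ` S))
          (mulop (loc S A) 1) (ext_op K A (loc S A))
     \<and> right_ring_of_fractions R (mulop A 1) (mulop A ` S)
          (frac_image (Diff K (loc S A)) (ext_op K A (loc S A)) R (mulop A ` S))
          (mulop (loc S A) 1) (ext_op K A (loc S A))
     \<and> left_ring_of_fractions (Diff K A) (mulop A 1) (mulop A ` S)
          (Diff K (loc S A)) (mulop (loc S A) 1) (ext_op K A (loc S A))
     \<and> right_ring_of_fractions (Diff K A) (mulop A 1) (mulop A ` S)
          (Diff K (loc S A)) (mulop (loc S A) 1) (ext_op K A (loc S A))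
     \<and> mulop (loc S A) ` (loc S A)
          \<subseteq> frac_image (Diff K (loc S A)) (ext_op K A (loc S A)) R (mulop A ` S)
     \<and> frac_image (Diff K (loc S A)) (ext_op K A (loc S A)) R (mulop A ` S) \<subseteq> Diff K (loc S A)
     \<and> (frac_image (Diff K (loc S A)) (ext_op K A (loc S A)) R (mulop A ` S) = Diff K (loc S A)
          \<longrightarrow> essential_left R (Diff K A) R \<and> essential_right R (Diff K A) R)"
proof -
  interpret setting K A S using assms by (unfold_locales) auto
  have R: "subalg_containing R K A" by fact
  have eft: "ess_finite_type K A" by fact
  have "FI R \<subseteq> Diff K L" unfolding frac_image_def by blast
  then show ?thesis
    using left_den[OF R] right_den[OF R] regular_R[OF R] left_frac_R[OF R] right_frac_R[OF R]
      left_frac_D[OF eft] right_frac_D[OF eft] mulL_FI[OF R] essential[OF R] by blast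
qed

end
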